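(* Under the hypotheses of Theorem 2 (assumptions (A), (C), and $\omega_1'\ge1$ for some $k\in(0,\beta)$, $p,q>0$, $p+q\le1$, with $\theta'=\min\{(\omega_1'-1)/2,(1-p-q)/\omega_2\}$), for every $\mathbf{x}_0=(u_1,u_0)^\top\in\mathrm{Dom}(\mathcal{A})$ the function $\mathbf{x}(t)=(w(t),u(t))^\top=\mathcal{T}(t)\mathbf{x}_0$ lies in $\mathrm{Dom}(\mathcal{A})$ and satisfies $\mathbf{x}'(t)=\mathcal{A}\mathbf{x}(t)$; $u(t)$ is a solution of $u''(t)+Du'(t)+\tilde Au(t)=0$ with $u(0)=u_0$, $u'(0)=u_1$, and there is a constant $C>0$ with \[ \|u(t)\|_1^2+\|u'(t)\|^2\le Ce^{-2k\theta' t}\bigl(\|u_0\|_1^2+\|u_1\|^2\bigr)\qquad\text{for all }t\ge0 . \]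
   Context: $H$ is a complex Hilbert space with inner product $(\cdot,\cdot)$ and norm $\|\cdot\|$; $\mathcal{L}(X,Y)$ denotes bounded operators from $X$ to $Y$. Assumption (A): $A:\mathrm{Dom}(A)\subset H\to H$ is m-sectorial (densely defined, numerical range in a sector $\{|\mathrm{Im}\,z|\le\tan(\omega)\,\mathrm{Re}\,z\}$ for some $\omega\in[0,\pi/2)$, no proper sectorial extension), and $\mathrm{Re}(Ax,x)\ge a_0\|x\|^2$ for some $a_0>0$ and all $x\in\mathrm{Dom}(A)$. Then there are a self-adjoint positive definite $T$ (with $T\ge a_0$) and a bounded self-adjoint $S$ on $H$ with $A=T^{1/2}(I+iS)T^{1/2}$. For $s\ge0$, $H_s=\mathrm{Dom}(T^{s/2})$ with norm $\|x\|_s=\|T^{s/2}x\|$; for $s<0$, $H_s$ is the completion of $H$ in $\|x\|_s=\|T^{s/2}x\|$. $(\cdot,\cdot)_{-1,1}$ is the duality pairing on $H_{-1}\times H_1$ extending $(\cdot,\cdot)$. $\tilde A\in\mathcal{L}(H_1,H_{-1})$ is the continuous extension of $A$; $\tilde S=T^{1/2}ST^{1/2}\in\mathcal{L}(H_1,H_{-1})$. Assumption (C): $D\in\mathcal{L}(H_1,H_{-1})$ and $\delta=\inf_{x\in H_1,x\ne0}\mathrm{Re}(Dx,x)_{-1,1}/\|x\|_1^2>0$; $\beta=\inf_{x\in H_1,x\ne0}\mathrm{Re}(Dx,x)_{-1,1}/\|x\|^2>0$. Put $D'=T^{-1/2}DT^{-1/2}\in\mathcal{L}(H)$, $D_1=\tfrac12T^{1/2}(D'+D'^*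 )T^{1/2}$, $D_2=\tfrac1{2i}T^{1/2}(D'-D'^* )T^{1/2}$. $\|\tilde S\|$, $\|D_2\|$ are norms in $\mathcal{L}(H_1,H_{-1})$. $\omega_1'=a_0(\delta/k-\|\tilde S\|^2/(4pk^2)-\|D_2\|^2/(4q))$ and $\omega_2=\sup_{x\in H_1,x\ne0}[\|x\|_1^2+k(D_1x,x)_{-1,1}+k^2\|x\|^2]/\|x\|_1^2$. Energy space $\mathcal{H}=H\times H_1$ with $\|(x_1,x_2)^\top\|_{\mathcal{H}}^2=\|x_1\|^2+\|x_2\|_1^2$; $\mathcal{A}(x_1,x_2)^\top=(-Dx_1-\tilde Ax_2,\;x_1)^\top$ with $\mathrm{Dom}(\mathcal{A})=\{(x_1,x_2)^\top: x_1,x_2\in H_1,\ Dx_1+\tilde Ax_2\in H\}$; $\mathcal{T}(t)=\exp(t\mathcal{A})$ is the $C_0$-semigroup generated by $\mathcal{A}$ (which exists by Theorem 2). A solution of $u''+Du'+\tilde Au=0$ is a function $u(t)\in H_1$ with $u'(t)\in H_1$, $u''(t)\in H$, $Du'(t)+\tilde Au(t)\in H$ and $u''(t)+Du'(t)+\tilde Au(t)=0$. *)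

theory Defs
  imports "HOL-Analysis.Analysis"
begin

class complex_vector = real_vector +
  fixes scaleC :: "complex \<Rightarrow> 'a \<Rightarrow> 'a" (infixr "*\<^sub>C" 75)
  assumes scaleC_add_right: "a *\<^sub>C (x + y) = a *\<^sub>C x + a *\<^sub>C y"
    and scaleC_add_left: "(a + b) *\<^sub>C x = a *\<^sub>C x + b *\<^sub>C x"
    and scaleC_scaleC: "a *\<^sub>C (b *\<^sub>C x) = (a * b) *\<^sub>C x"
    and scaleC_one: "1 *\<^sub>C x = x"
    and scaleR_scaleC: "r *\<^sub>R x = complex_of_real r *\<^sub>C x"

class complex_normed_vector = complex_vector + real_normed_vector +
  assumes norm_scaleC: "norm (a *\<^sub>C x) = cmod a * norm x"

text \<open>The complex Hilbert space H is a type 'a of class complex_normed_vector + banach,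
  together with an inner product ip, linear in the first and conjugate-linear in the
  second argument, which induces the norm.  Unbounded operators are pairs (domain V, map f).\<close>

definition is_cinner :: "('a::{complex_normed_vector,banach} \<Rightarrow> 'a \<Rightarrow> complex) \<Rightarrow> bool" where
  "is_cinner ip \<longleftrightarrow>
     (\<forall>x y z. ip (x + y) z = ip x z + ip y z) \<and>
     (\<forall>c x y. ip (c *\<^sub>C x) y = c * ip x y) \<and>
     (\<forall>x y. ip y x = cnj (ip x y)) \<and>
     (\<forall>x. ip x x = complex_of_real ((norm x)\<^sup>2))"

definition csubspace_on :: "'a::complex_vector set \<Rightarrow> bool" where
  "csubspace_on V \<longleftrightarrow> 0 \<in> V \<and> (\<forall>x\<in>V. \<forall>y\<in>V. x + y \<in> V) \<and> (\<forall>c. \<forall>x\<in>V. c *\<^sub>C x \<in> V)"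

definition clinear_on :: "'a::complex_vector set \<Rightarrow> ('a \<Rightarrow> 'b::complex_vector) \<Rightarrow> bool" where
  "clinear_on V f \<longleftrightarrow> (\<forall>x\<in>V. \<forall>y\<in>V. f (x + y) = f x + f y) \<and> (\<forall>c. \<forall>x\<in>V. f (c *\<^sub>C x) = c *\<^sub>C f x)"

definition lin_op :: "'a::complex_vector set \<Rightarrow> ('a \<Rightarrow> 'a) \<Rightarrow> bool" where
  "lin_op V f \<longleftrightarrow> csubspace_on V \<and> clinear_on V f"

definition densely_defined :: "'a::complex_normed_vector set \<Rightarrow> bool" where
  "densely_defined V \<longleftrightarrow> closure V = UNIV"

definition sectorial :: "('a \<Rightarrow> 'a \<Rightarrow> complex) \<Rightarrow> 'a set \<Rightarrow> ('a \<Rightarrow> 'a) \<Rightarrow> real \<Rightarrow> bool" where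
  "sectorial ip V f \<omega> \<longleftrightarrow> (\<forall>x\<in>V. \<bar>Im (ip (f x) x)\<bar> \<le> tan \<omega> * Re (ip (f x) x))"

definition m_sectorial :: "('a::complex_normed_vector \<Rightarrow> 'a \<Rightarrow> complex) \<Rightarrow> 'a set \<Rightarrow> ('a \<Rightarrow> 'a) \<Rightarrow> bool" where
  "m_sectorial ip V f \<longleftrightarrow>
     lin_op V f \<and> densely_defined V \<and>
     (\<exists>\<omega>. 0 \<le> \<omega> \<and> \<omega> < pi / 2 \<and> sectorial ip V f \<omega>) \<and>
     \<not> (\<exists>V' g \<omega>'. lin_op V' g \<and> V \<subset> V' \<and> (\<forall>x\<in>V. g x = f x) \<and>
          0 \<le> \<omega>' \<and> \<omega>' < pi / 2 \<and> sectorial ip V' g \<omega>')"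

text \<open>Self-adjoint (unbounded) operator: densely defined, symmetric, and Dom(f^*) \<subseteq> Dom(f).\<close>
definition self_adjoint_op :: "('a::complex_normed_vector \<Rightarrow> 'a \<Rightarrow> complex) \<Rightarrow> 'a set \<Rightarrow> ('a \<Rightarrow> 'a) \<Rightarrow> bool" where
  "self_adjoint_op ip V f \<longleftrightarrow>
     lin_op V f \<and> densely_defined V \<and>
     (\<forall>x\<in>V. \<forall>y\<in>V. ip (f x) y = ip x (f y)) \<and>
     (\<forall>y. (\<exists>z. \<forall>x\<in>V. ip (f x) y = ip x z) \<longrightarrow> y \<in> V)"

definition positive_op :: "('a \<Rightarrow> 'a \<Rightarrow> complex) \<Rightarrow> 'a set \<Rightarrow> ('a \<Rightarrow> 'a) \<Rightarrow> bool" where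
  "positive_op ip V f \<longleftrightarrow> (\<forall>x\<in>V. 0 \<le> Re (ip (f x) x))"

definition bounded_clinear_op :: "('a::complex_normed_vector \<Rightarrow> 'a) \<Rightarrow> bool" where
  "bounded_clinear_op f \<longleftrightarrow> clinear_on UNIV f \<and> (\<exists>K. \<forall>x. norm (f x) \<le> K * norm x)"

definition is_sqrt_op :: "('a::complex_normed_vector \<Rightarrow> 'a \<Rightarrow> complex) \<Rightarrow> 'a set \<Rightarrow> ('a \<Rightarrow> 'a) \<Rightarrow> 'a set \<Rightarrow> ('a \<Rightarrow> 'a) \<Rightarrow> bool" where
  "is_sqrt_op ip VR R VT T \<longleftrightarrow>
     self_adjoint_op ip VR R \<and> positive_op ip VR R \<and>
     VT = {x \<in> VR. R x \<in> VR} \<and> (\<forall>x\<in>VT. T x = R (R x))"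

text \<open>D is represented through D' = T^(-1/2) D T^(-1/2)
  (a bounded operator on H), so (Dx,y)_{-1,1} = (D' R x, R y) with R = T^(1/2);
  Dps is the Hilbert adjoint D'^*.  ||x||_1 = ||R x||, and ||z||_{-1} = ||T^(-1/2) z||.\<close>

definition delta_C :: "('a::complex_normed_vector \<Rightarrow> 'a \<Rightarrow> complex) \<Rightarrow> 'a set \<Rightarrow> ('a \<Rightarrow> 'a) \<Rightarrow> ('a \<Rightarrow> 'a) \<Rightarrow> real" where
  "delta_C ip VR R Dp = (INF x\<in>VR - {0}. Re (ip (Dp (R x)) (R x)) / (norm (R x))\<^sup>2)"

definition beta_C :: "('a::complex_normed_vector \<Rightarrow> 'a \<Rightarrow> complex) \<Rightarrow> 'a set \<Rightarrow> ('a \<Rightarrow> 'a) \<Rightarrow> ('a \<Rightarrow> 'a) \<Rightarrow> real" where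
  "beta_C ip VR R Dp = (INF x\<in>VR - {0}. Re (ip (Dp (R x)) (R x)) / (norm x)\<^sup>2)"

text \<open>Norm of S~ = T^(1/2) S T^(1/2) in L(H_1,H_{-1}).\<close>
definition normS_tilde :: "'a::complex_normed_vector set \<Rightarrow> ('a \<Rightarrow> 'a) \<Rightarrow> ('a \<Rightarrow> 'a) \<Rightarrow> real" where
  "normS_tilde VR R S = (SUP x\<in>VR - {0}. norm (S (R x)) / norm (R x))"

text \<open>Norm of D_2 = (1/(2i)) T^(1/2)(D' - D'^*)T^(1/2) in L(H_1,H_{-1}).\<close>
definition normD2 :: "'a::complex_normed_vector set \<Rightarrow> ('a \<Rightarrow> 'a) \<Rightarrow> ('a \<Rightarrow> 'a) \<Rightarrow> ('a \<Rightarrow> 'a) \<Rightarrow> real" where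
  "normD2 VR R Dp Dps = (SUP x\<in>VR - {0}. norm ((1 / (2 * \<i>)) *\<^sub>C (Dp (R x) - Dps (R x))) / norm (R x))"

definition omega1' :: "('a::complex_normed_vector \<Rightarrow> 'a \<Rightarrow> complex) \<Rightarrow> 'a set \<Rightarrow> ('a \<Rightarrow> 'a) \<Rightarrow> ('a \<Rightarrow> 'a) \<Rightarrow> ('a \<Rightarrow> 'a)
    \<Rightarrow> ('a \<Rightarrow> 'a) \<Rightarrow> real \<Rightarrow> real \<Rightarrow> real \<Rightarrow> real \<Rightarrow> real" where
  "omega1' ip VR R S Dp Dps a0 k p q =
     a0 * (delta_C ip VR R Dp / k - (normS_tilde VR R S)\<^sup>2 / (4 * p * k\<^sup>2)
           - (normD2 VR R Dp Dps)\<^sup>2 / (4 * q))"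

text \<open>(D_1 x, x)_{-1,1} = ((1/2)(D' + D'^*) R x, R x).\<close>
definition omega2 :: "('a::complex_normed_vector \<Rightarrow> 'a \<Rightarrow> complex) \<Rightarrow> 'a set \<Rightarrow> ('a \<Rightarrow> 'a) \<Rightarrow> ('a \<Rightarrow> 'a) \<Rightarrow> ('a \<Rightarrow> 'a)
    \<Rightarrow> real \<Rightarrow> real" where
  "omega2 ip VR R Dp Dps k =
     (SUP x\<in>VR - {0}. ((norm (R x))\<^sup>2
        + k * Re (ip ((1/2) *\<^sub>C (Dp (R x) + Dps (R x))) (R x)) + k\<^sup>2 * (norm x)\<^sup>2) / (norm (R x))\<^sup>2)"

definition theta' :: "('a::complex_normed_vector \<Rightarrow> 'a \<Rightarrow> complex) \<Rightarrow> 'a set \<Rightarrow> ('a \<Rightarrow> 'a) \<Rightarrow> ('a \<Rightarrow> 'a) \<Rightarrow> ('a \<Rightarrow> 'a)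
    \<Rightarrow> ('a \<Rightarrow> 'a) \<Rightarrow> real \<Rightarrow> real \<Rightarrow> real \<Rightarrow> real \<Rightarrow> real" where
  "theta' ip VR R S Dp Dps a0 k p q =
     min ((omega1' ip VR R S Dp Dps a0 k p q - 1) / 2) ((1 - p - q) / omega2 ip VR R Dp Dps k)"

text \<open>Energy space \<H> = H \<times> H_1 (carrier UNIV \<times> VR) and its norm.\<close>
definition Hsp :: "'a set \<Rightarrow> ('a \<times> 'a) set" where
  "Hsp VR = UNIV \<times> VR"

definition hnorm :: "('a::complex_normed_vector \<Rightarrow> 'a) \<Rightarrow> 'a \<times> 'a \<Rightarrow> real" where
  "hnorm R z = sqrt ((norm (fst z))\<^sup>2 + (norm (R (snd z)))\<^sup>2)"

text \<open>The operator \<A> and its domain; D x_1 + A~ x_2 = T^(1/2)(D' R x_1 + (I + iS) R x_2)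
  lies in H iff D' R x_1 + (I + iS) R x_2 \<in> Dom(T^(1/2)).\<close>
definition dom_calA :: "'a::complex_normed_vector set \<Rightarrow> ('a \<Rightarrow> 'a) \<Rightarrow> ('a \<Rightarrow> 'a) \<Rightarrow> ('a \<Rightarrow> 'a) \<Rightarrow> ('a \<times> 'a) set" where
  "dom_calA VR R S Dp = {(x1, x2). x1 \<in> VR \<and> x2 \<in> VR \<and>
       Dp (R x1) + (R x2 + \<i> *\<^sub>C S (R x2)) \<in> VR}"

definition calA :: "('a::complex_normed_vector \<Rightarrow> 'a) \<Rightarrow> ('a \<Rightarrow> 'a) \<Rightarrow> ('a \<Rightarrow> 'a) \<Rightarrow> 'a \<times> 'a \<Rightarrow> 'a \<times> 'a" where
  "calA R S Dp z = (- R (Dp (R (fst z)) + (R (snd z) + \<i> *\<^sub>C S (R (snd z)))), fst z)"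

definition pscaleC :: "complex \<Rightarrow> 'a::complex_vector \<times> 'a \<Rightarrow> 'a \<times> 'a" where
  "pscaleC c z = (c *\<^sub>C fst z, c *\<^sub>C snd z)"

definition C0_semigroup :: "'a::complex_normed_vector set \<Rightarrow> ('a \<Rightarrow> 'a) \<Rightarrow> (real \<Rightarrow> 'a \<times> 'a \<Rightarrow> 'a \<times> 'a) \<Rightarrow> bool" where
  "C0_semigroup VR R Tsg \<longleftrightarrow>
     (\<forall>t\<ge>0. \<forall>z\<in>Hsp VR. Tsg t z \<in> Hsp VR) \<and>
     (\<forall>t\<ge>0. \<forall>z\<in>Hsp VR. \<forall>w\<in>Hsp VR. Tsg t (z + w) = Tsg t z + Tsg t w) \<and>
     (\<forall>t\<ge>0. \<forall>c. \<forall>z\<in>Hsp VR. Tsg t (pscaleC c z) = pscaleC c (Tsg t z)) \<and>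
     (\<forall>t\<ge>0. \<exists>K. \<forall>z\<in>Hsp VR. hnorm R (Tsg t z) \<le> K * hnorm R z) \<and>
     (\<forall>z\<in>Hsp VR. Tsg 0 z = z) \<and>
     (\<forall>s\<ge>0. \<forall>t\<ge>0. \<forall>z\<in>Hsp VR. Tsg (s + t) z = Tsg s (Tsg t z)) \<and>
     (\<forall>z\<in>Hsp VR. ((\<lambda>t. hnorm R (Tsg t z - z)) \<longlongrightarrow> 0) (at_right 0))"

definition generated_by :: "'a::complex_normed_vector set \<Rightarrow> ('a \<Rightarrow> 'a) \<Rightarrow> (real \<Rightarrow> 'a \<times> 'a \<Rightarrow> 'a \<times> 'a)
    \<Rightarrow> ('a \<times> 'a) set \<Rightarrow> ('a \<times> 'a \<Rightarrow> 'a \<times> 'a) \<Rightarrow> bool" where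
  "generated_by VR R Tsg Dom G \<longleftrightarrow>
     C0_semigroup VR R Tsg \<and> Dom \<subseteq> Hsp VR \<and> (\<forall>z\<in>Dom. G z \<in> Hsp VR) \<and>
     Dom = {z \<in> Hsp VR. \<exists>y\<in>Hsp VR.
              ((\<lambda>t. hnorm R ((1 / t) *\<^sub>R (Tsg t z - z) - y)) \<longlongrightarrow> 0) (at_right 0)} \<and>
     (\<forall>z\<in>Dom. ((\<lambda>t. hnorm R ((1 / t) *\<^sub>R (Tsg t z - z) - G z)) \<longlongrightarrow> 0) (at_right 0))"

definition has_deriv_N :: "('b \<Rightarrow> real) \<Rightarrow> (real \<Rightarrow> 'b::real_vector) \<Rightarrow> 'b \<Rightarrow> real \<Rightarrow> bool" where
  "has_deriv_N N f f' t \<longleftrightarrow>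
     ((\<lambda>s. N ((1 / (s - t)) *\<^sub>R (f s - f t) - f')) \<longlongrightarrow> 0) (at t within {0..})"

definition is_solution :: "'a::complex_normed_vector set \<Rightarrow> ('a \<Rightarrow> 'a) \<Rightarrow> ('a \<Rightarrow> 'a) \<Rightarrow> ('a \<Rightarrow> 'a)
    \<Rightarrow> (real \<Rightarrow> 'a) \<Rightarrow> (real \<Rightarrow> 'a) \<Rightarrow> (real \<Rightarrow> 'a) \<Rightarrow> bool" where
  "is_solution VR R S Dp u u' u'' \<longleftrightarrow>
     (\<forall>t\<ge>0. u t \<in> VR \<and> u' t \<in> VR \<and>
        has_deriv_N (\<lambda>x. norm (R x)) u (u' t) t \<and>
        has_deriv_N norm u' (u'' t) t \<and>
        Dp (R (u' t)) + (R (u t) + \<i> *\<^sub>C S (R (u t))) \<in> VR \<and>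
        u'' t + R (Dp (R (u' t)) + (R (u t) + \<i> *\<^sub>C S (R (u t)))) = 0)"

end

theory Submission
  imports Defs
begin


lemma scaleC_zero_left [simp]: "(0::complex) *\<^sub>C (x::'a::complex_vector) = 0"
proof -
  have "(0::complex) *\<^sub>C x = (0 + 0) *\<^sub>C x" by simp
  also have "\<dots> = 0 *\<^sub>C x + 0 *\<^sub>C x" by (rule scaleC_add_left)
  finally show ?thesis by simp
qed

lemma scaleC_zero_right [simp]: "a *\<^sub>C (0::'a::complex_vector) = 0"
proof -
  have "a *\<^sub>C (0::'a) = a *\<^sub>C (0 + 0)" by simp
  also have "\<dots> = a *\<^sub>C 0 + a *\<^sub>C 0" by (rule scaleC_add_right)
  finally show ?thesis by simp
qed

lemma scaleC_minus_right: "a *\<^sub>C (- x::'a::complex_vector) = - (a *\<^sub>C x)"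
proof -
  have "a *\<^sub>C (- x) + a *\<^sub>C x = a *\<^sub>C (- x + x)" by (simp only: scaleC_add_right)
  then have "a *\<^sub>C (- x) + a *\<^sub>C x = 0" by (simp only: add.left_inverse right_minus scaleC_zero_right scaleC_zero_left)
  then show ?thesis by (simp only: eq_neg_iff_add_eq_0)
qed

lemma scaleC_diff_right: "a *\<^sub>C (x - y::'a::complex_vector) = a *\<^sub>C x - a *\<^sub>C y"
  by (simp only: scaleC_add_right scaleC_minus_right diff_conv_add_uminus)

lemma scaleC_minus_left: "(- a) *\<^sub>C (x::'a::complex_vector) = - (a *\<^sub>C x)"
proof -
  have "(- a) *\<^sub>C x + a *\<^sub>C x = (- a + a) *\<^sub>C x" by (simp only: scaleC_add_left)
  then have "(- a) *\<^sub>C x + a *\<^sub>C x = 0" by (simp only: add.left_inverse right_minus scaleC_zero_right scaleC_zero_left)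
  then show ?thesis by (simp only: eq_neg_iff_add_eq_0)
qed

lemma scaleC_diff_left: "(a - b) *\<^sub>C (x::'a::complex_vector) = a *\<^sub>C x - b *\<^sub>C x"
  by (simp only: scaleC_add_left scaleC_minus_left diff_conv_add_uminus)

lemma scaleC_of_real: "complex_of_real r *\<^sub>C (x::'a::complex_vector) = r *\<^sub>R x"
  by (simp add: scaleR_scaleC)

locale cinner =
  fixes ip :: "'a::{complex_normed_vector,banach} \<Rightarrow> 'a \<Rightarrow> complex"
  assumes hilbert: "is_cinner ip"
begin

lemma ip_add_left: "ip (x + y) z = ip x z + ip y z"
  using hilbert unfolding is_cinner_def by blast
lemma ip_scaleC_left: "ip (c *\<^sub>C x) y = c * ip x y"
  using hilbert unfolding is_cinner_def by blast
lemma ip_sym: "ip y x = cnj (ip x y)"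
  using hilbert unfolding is_cinner_def by blast
lemma ip_self: "ip x x = complex_of_real ((norm x)\<^sup>2)"
  using hilbert unfolding is_cinner_def by blast

lemma ip_add_right: "ip z (x + y) = ip z x + ip z y"
  by (metis complex_cnj_add ip_add_left ip_sym)
lemma ip_scaleC_right: "ip x (c *\<^sub>C y) = cnj c * ip x y"
  by (metis complex_cnj_mult ip_scaleC_left ip_sym)
lemma ip_zero_left [simp]: "ip 0 y = 0"
  by (metis add_cancel_right_left add_0 ip_add_left)
lemma ip_zero_right [simp]: "ip x 0 = 0"
  by (metis complex_cnj_zero ip_sym ip_zero_left)
lemma ip_minus_left: "ip (- x) y = - ip x y"
  by (metis add.inverse_unique add.right_inverse ip_add_left ip_zero_left)
lemma ip_minus_right: "ip x (- y) = - ip x y"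
  by (metis complex_cnj_minus ip_minus_left ip_sym)
lemma ip_diff_left: "ip (x - y) z = ip x z - ip y z"
  by (simp only: diff_conv_add_uminus ip_add_left ip_minus_left)
lemma ip_diff_right: "ip z (x - y) = ip z x - ip z y"
  by (simp only: diff_conv_add_uminus ip_add_right ip_minus_right)
lemma ip_scaleR_left: "ip (r *\<^sub>R x) y = complex_of_real r * ip x y"
  by (simp add: scaleR_scaleC ip_scaleC_left)
lemma ip_scaleR_right: "ip x (r *\<^sub>R y) = complex_of_real r * ip x y"
  by (simp add: scaleR_scaleC ip_scaleC_right)

lemma Re_ip_self: "Re (ip x x) = (norm x)\<^sup>2"
  by (simp add: ip_self)
lemma Im_ip_self: "Im (ip x x) = 0"
  by (simp add: ip_self)

lemma Re_ip_sym: "Re (ip y x) = Re (ip x y)"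
  by (subst ip_sym) simp

lemma norm_add_sq: "(norm (x + y))\<^sup>2 = (norm x)\<^sup>2 + 2 * Re (ip x y) + (norm y)\<^sup>2"
proof -
  have "ip (x + y) (x + y) = ip x x + ip x y + ip y x + ip y y"
    by (simp add: ip_add_left ip_add_right)
  then have "Re (ip (x + y) (x + y)) = Re (ip x x) + Re (ip x y) + Re (ip y x) + Re (ip y y)"
    by simp
  then show ?thesis by (simp add: Re_ip_self Re_ip_sym)
qed

lemma norm_diff_sq: "(norm (x - y))\<^sup>2 = (norm x)\<^sup>2 - 2 * Re (ip x y) + (norm y)\<^sup>2"
  using norm_add_sq[of x "- y"] by (simp add: ip_minus_right)

lemma cauchy_schwarz: "cmod (ip x y) \<le> norm x * norm y"
proof (cases "y = 0")
  case True then show ?thesis by simp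
next
  case False
  define n where "n = (norm y)\<^sup>2"
  have n: "n > 0" using False by (simp add: n_def)
  define c where "c = ip x y"
  define a where "a = c / complex_of_real n"
  have "ip (x - a *\<^sub>C y) (x - a *\<^sub>C y) = ip x x - cnj a * ip x y - a * ip y x + a * cnj a * ip y y"
    by (simp add: ip_diff_left ip_diff_right ip_scaleC_left ip_scaleC_right algebra_simps)
  also have "\<dots> = complex_of_real ((norm x)\<^sup>2 - (cmod c)\<^sup>2 / n)"
    using n unfolding a_def
    apply (simp add: ip_self[of y, folded n_def] ip_sym[of y x, folded c_def] c_def[symmetric] ip_self[of x])
    apply (simp add: complex_eq_iff complex_norm power2_eq_square field_simps)
    apply (simp add: cmod_def power2_eq_square[symmetric])
    done
  finally have "0 \<le> (norm x)\<^sup>2 - (cmod c)\<^sup>2 / n"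
    by (metis Re_complex_of_real Re_ip_self zero_le_power2)
  then have "(cmod c)\<^sup>2 \<le> (norm x)\<^sup>2 * (norm y)\<^sup>2"
    using n by (simp add: n_def field_simps)
  then have "(cmod c)\<^sup>2 \<le> (norm x * norm y)\<^sup>2" by (simp add: power_mult_distrib)
  then show ?thesis unfolding c_def
    using abs_le_square_iff by fastforce
qed

lemma Re_ip_le: "Re (ip x y) \<le> norm x * norm y"
  using cauchy_schwarz[of x y] complex_Re_le_cmod order_trans by blast
lemma abs_Re_ip_le: "\<bar>Re (ip x y)\<bar> \<le> norm x * norm y"
  using cauchy_schwarz[of x y] abs_Re_le_cmod order_trans by blast
lemma abs_Im_ip_le: "\<bar>Im (ip x y)\<bar> \<le> norm x * norm y"
  using cauchy_schwarz[of x y] abs_Im_le_cmod order_trans by blast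

lemma ip_tendsto_right:
  assumes "(f \<longlongrightarrow> y) F"
  shows "((\<lambda>n. ip x (f n)) \<longlongrightarrow> ip x y) F"
proof -
  have "((\<lambda>n. f n - y) \<longlongrightarrow> 0) F" using assms by (rule LIM_zero)
  then have "((\<lambda>n. norm (f n - y)) \<longlongrightarrow> 0) F" by (rule tendsto_norm_zero)
  then have "((\<lambda>n. norm x * norm (f n - y)) \<longlongrightarrow> norm x * 0) F"
    by (intro tendsto_intros)
  then have "((\<lambda>n. norm x * norm (f n - y)) \<longlongrightarrow> 0) F" by simp
  then have "((\<lambda>n. ip x (f n) - ip x y) \<longlongrightarrow> 0) F"
  proof (rule Lim_null_comparison[rotated])
    have "norm (ip x (f n) - ip x y) \<le> norm x * norm (f n - y)" for n
      unfolding ip_diff_right[symmetric] by (rule cauchy_schwarz)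
    then show "\<forall>\<^sub>F n in F. norm (ip x (f n) - ip x y) \<le> norm x * norm (f n - y)"
      by (intro always_eventually allI)
  qed
  then show ?thesis by (rule LIM_zero_cancel)
qed

lemma ip_tendsto_left:
  assumes "(f \<longlongrightarrow> y) F"
  shows "((\<lambda>n. ip (f n) x) \<longlongrightarrow> ip y x) F"
proof -
  have "((\<lambda>n. cnj (ip x (f n))) \<longlongrightarrow> cnj (ip x y)) F"
    by (intro tendsto_cnj ip_tendsto_right assms)
  then show ?thesis by (simp add: ip_sym[of x])
qed

lemma parallelogram: "(norm ((x::'a) + y))\<^sup>2 + (norm (x - y))\<^sup>2 = 2 * (norm x)\<^sup>2 + 2 * (norm y)\<^sup>2"
  using norm_add_sq[of x y] norm_diff_sq[of x y] by linarith

lemma ortho_dense_zero: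
  assumes "closure V = UNIV" "\<forall>v\<in>V. ip v w = 0"
  shows "w = 0"
proof -
  have "w \<in> closure V" using assms by simp
  then obtain f where f: "\<forall>n. f n \<in> V" "f \<longlonglongrightarrow> w" by (meson closure_sequential)
  have "(\<lambda>n. ip (f n) w) \<longlonglongrightarrow> ip w w" by (rule ip_tendsto_left[OF f(2)])
  moreover have "(\<lambda>n. ip (f n) w) = (\<lambda>n. 0)"
    by (intro ext) (use f(1) assms(2) in blast)
  ultimately have "(\<lambda>n. 0::complex) \<longlonglongrightarrow> ip w w" by simp
  then have "ip w w = 0" by (simp add: LIMSEQ_const_iff)
  then show ?thesis by (simp add: ip_self)
qed

end




context cinner begin

lemma quad_nonneg_zero:
  fixes r N :: real
  assumes "N \<ge> 0" "\<forall>t. 0 \<le> 2 * t * r + t\<^sup>2 * N"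
  shows "r = 0"
proof (rule ccontr)
  assume r: "r \<noteq> 0"
  define s where "s = r / (N + 1)"
  have rs: "r = s * (N + 1)" using assms(1) by (simp add: s_def)
  have s0: "s \<noteq> 0" using r rs by auto
  have "2 * (- s) * r + (- s)\<^sup>2 * N = - (s\<^sup>2 * (N + 2))"
    unfolding rs by (simp add: power2_eq_square algebra_simps)
  also have "\<dots> < 0" using s0 assms(1) by (simp add: add_nonneg_pos)
  finally show False using assms(2) by (metis not_le)
qed

lemma proj_exists:
  fixes M :: "'a set"
  assumes ne: "M \<noteq> {}" and mid: "\<forall>a\<in>M. \<forall>b\<in>M. (1/2) *\<^sub>R (a + b) \<in> M"
  shows "\<exists>z f. (\<forall>n. f n \<in> M) \<and> f \<longlonglongrightarrow> z \<and> (\<forall>m\<in>M. norm (z - x) \<le> norm (m - x))"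
proof -
  define d where "d = Inf ((\<lambda>m. norm (m - x)) ` M)"
  have bdd: "bdd_below ((\<lambda>m. norm (m - x)) ` M)" by (rule bdd_belowI[of _ 0]) auto
  have dle: "d \<le> norm (m - x)" if "m \<in> M" for m
    unfolding d_def using bdd that by (simp add: cInf_lower)
  have d0: "d \<ge> 0" unfolding d_def using ne by (intro cInf_greatest) auto
  have "\<exists>m\<in>M. norm (m - x) < d + 1 / (real n + 1)" for n
  proof -
    have "Inf ((\<lambda>m. norm (m - x)) ` M) < d + 1 / (real n + 1)" unfolding d_def
      by (simp add: add_pos_pos)
    then show ?thesis using ne by (simp add: cInf_less_iff[OF _ bdd])
  qed
  then obtain f where f: "\<And>n. f n \<in> M" "\<And>n. norm (f n - x) < d + 1 / (real n + 1)"
    by metis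
  define e where "e n = 1 / (real n + 1)" for n
  have e: "0 < e n" "e n \<le> 1" for n unfolding e_def by auto
  have key: "(norm (f n - f k))\<^sup>2 \<le> (4 * d + 2) * (e n + e k)" for n k
  proof -
    have mid': "(1/2) *\<^sub>R (f n + f k) \<in> M" using mid f by blast
    have "(f n - x) + (f k - x) = 2 *\<^sub>R ((1/2) *\<^sub>R (f n + f k) - x)"
      by (simp add: algebra_simps scaleR_2)
    then have "norm ((f n - x) + (f k - x)) = 2 * norm ((1/2) *\<^sub>R (f n + f k) - x)" by simp
    then have A: "(norm ((f n - x) + (f k - x)))\<^sup>2 \<ge> 4 * d\<^sup>2"
      using dle[OF mid'] d0 by (simp add: power_mult_distrib power_mono)
    have B: "(norm (f n - x))\<^sup>2 \<le> (d + e n)\<^sup>2" using f(2)[of n] d0 unfolding e_def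
      by (intro power_mono) auto
    have C: "(norm (f k - x))\<^sup>2 \<le> (d + e k)\<^sup>2" using f(2)[of k] d0 unfolding e_def
      by (intro power_mono) auto
    have "(norm (f n - f k))\<^sup>2 = 2 * (norm (f n - x))\<^sup>2 + 2 * (norm (f k - x))\<^sup>2
              - (norm ((f n - x) + (f k - x)))\<^sup>2"
      using parallelogram[of "f n - x" "f k - x"] by simp
    also have "\<dots> \<le> 2 * (d + e n)\<^sup>2 + 2 * (d + e k)\<^sup>2 - 4 * d\<^sup>2" using A B C by linarith
    also have "\<dots> = 4 * d * (e n + e k) + 2 * (e n)\<^sup>2 + 2 * (e k)\<^sup>2"
      by (simp add: power2_eq_square algebra_simps)
    also have "\<dots> \<le> (4 * d + 2) * (e n + e k)"
    proof -
      have "(e n)\<^sup>2 \<le> e n" "(e k)\<^sup>2 \<le> e k" using e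
        by (simp_all add: power2_eq_square mult_le_cancel_left1)
      then show ?thesis by (simp add: algebra_simps)
    qed
    finally show ?thesis .
  qed
  have "Cauchy f"
  proof (rule metric_CauchyI)
    fix eps :: real assume eps: "eps > 0"
    obtain N :: nat where N: "(4 * d + 2) * 2 / eps\<^sup>2 < real N"
      using reals_Archimedean2 by blast
    show "\<exists>N. \<forall>m\<ge>N. \<forall>n\<ge>N. dist (f m) (f n) < eps"
    proof (intro exI allI impI)
      fix m n assume mn: "N \<le> m" "N \<le> n"
      have em: "e m \<le> 1 / (real N + 1)" "e n \<le> 1 / (real N + 1)" unfolding e_def using mn
        by (simp_all add: frac_le)
      have "(norm (f m - f n))\<^sup>2 \<le> (4 * d + 2) * (2 / (real N + 1))"
      proof -
        have "e m + e n \<le> 2 / (real N + 1)" using em by simp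
        then have "(4 * d + 2) * (e m + e n) \<le> (4 * d + 2) * (2 / (real N + 1))"
          by (rule mult_left_mono) (use d0 in simp)
        then show ?thesis using key[of m n] by linarith
      qed
      also have "\<dots> < eps\<^sup>2"
      proof -
        have "(4 * d + 2) * 2 < eps\<^sup>2 * real N" using N eps by (simp add: field_simps)
        then have "(4 * d + 2) * 2 < eps\<^sup>2 * (real N + 1)" using eps
        proof -
          have "eps\<^sup>2 * real N \<le> eps\<^sup>2 * (real N + 1)" using eps by simp
          then show ?thesis using \<open>(4 * d + 2) * 2 < eps\<^sup>2 * real N\<close> by linarith
        qed
        then show ?thesis by (simp add: field_simps)
      qed
      finally have "(norm (f m - f n))\<^sup>2 < eps\<^sup>2" .
      then show "dist (f m) (f n) < eps" using eps by (simp add: dist_norm power_less_imp_less_base)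
    qed
  qed
  then obtain z where z: "f \<longlonglongrightarrow> z" using Cauchy_convergent_iff convergent_def by blast
  have lim1: "(\<lambda>n. norm (f n - x)) \<longlonglongrightarrow> norm (z - x)" by (intro tendsto_intros z)
  have e0: "e \<longlonglongrightarrow> 0" unfolding e_def using LIMSEQ_inverse_real_of_nat
    by (simp add: inverse_eq_divide add.commute)
  have lim2: "(\<lambda>n. d + e n) \<longlonglongrightarrow> d + 0" by (intro tendsto_intros e0)
  have "norm (z - x) \<le> d + 0"
  proof (rule LIMSEQ_le[OF lim1 lim2])
    show "\<exists>N. \<forall>n\<ge>N. norm (f n - x) \<le> d + e n" using f(2) unfolding e_def by (auto intro: less_imp_le)
  qed
  then show ?thesis using z f(1) dle by (intro exI[of _ z] exI[of _ f]) force
qed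

lemma proj_orth:
  fixes M :: "'a set"
  assumes addM: "\<forall>a\<in>M. \<forall>b\<in>M. a + b \<in> M" and scM: "\<forall>a\<in>M. \<forall>r. r *\<^sub>R a \<in> M"
    and f: "\<forall>n. f n \<in> M" "f \<longlonglongrightarrow> z" and mn: "\<forall>m\<in>M. norm (z - x) \<le> norm (m - x)"
    and u: "u \<in> M"
  shows "Re (ip u (z - x)) = 0"
proof -
  define w where "w = z - x"
  have "norm w \<le> norm (w + t *\<^sub>R u)" for t
  proof -
    have "(\<lambda>n. norm (f n + t *\<^sub>R u - x)) \<longlonglongrightarrow> norm (z + t *\<^sub>R u - x)"
      by (intro tendsto_intros f(2))
    moreover have "norm (z - x) \<le> norm (f n + t *\<^sub>R u - x)" for n
      using mn addM scM f(1) u by blast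
    ultimately have "norm (z - x) \<le> norm (z + t *\<^sub>R u - x)"
      by (intro LIMSEQ_le_const) auto
    then show ?thesis unfolding w_def by (simp add: algebra_simps)
  qed
  then have sq: "(norm w)\<^sup>2 \<le> (norm (w + t *\<^sub>R u))\<^sup>2" for t
    by (simp add: power_mono)
  have "0 \<le> 2 * t * Re (ip w u) + t\<^sup>2 * (norm u)\<^sup>2" for t
  proof -
    have "(norm (w + t *\<^sub>R u))\<^sup>2 = (norm w)\<^sup>2 + 2 * t * Re (ip w u) + t\<^sup>2 * (norm u)\<^sup>2"
      using norm_add_sq[of w "t *\<^sub>R u"] by (simp add: ip_scaleR_right power_mult_distrib)
    then show ?thesis using sq[of t] by linarith
  qed
  then have "Re (ip w u) = 0" by (intro quad_nonneg_zero[of "(norm u)\<^sup>2"]) auto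
  then show ?thesis unfolding w_def by (simp add: Re_ip_sym)
qed

end




locale opsetup = cinner ip for ip :: "'a::{complex_normed_vector,banach} \<Rightarrow> 'a \<Rightarrow> complex" +
  fixes VR VT :: "'a set" and R T S Dp Dps :: "'a \<Rightarrow> 'a" and a0 :: real
  assumes R_sa: "self_adjoint_op ip VR R"
    and VT_eq: "VT = {x \<in> VR. R x \<in> VR}" and T_eq: "\<forall>x\<in>VT. T x = R (R x)"
    and T_sa: "self_adjoint_op ip VT T"
    and T_ge: "\<forall>x\<in>VT. a0 * (norm x)\<^sup>2 \<le> Re (ip (T x) x)"
    and a0_pos: "a0 > 0"
    and S_bdd: "bounded_clinear_op S"
    and S_sa: "\<forall>x y. ip (S x) y = ip x (S y)"
    and Dp_bdd: "bounded_clinear_op Dp"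
    and Dps_adj: "\<forall>x y. ip (Dp x) y = ip x (Dps y)"
begin

lemma uminus_scaleC: "- (x::'a) = (-1) *\<^sub>C x"
  by (simp add: scaleC_minus_left scaleC_one)

lemma VR_sub: "csubspace_on VR" and R_lin: "clinear_on VR R"
  using R_sa unfolding self_adjoint_op_def lin_op_def by auto

lemma VR_zero: "0 \<in> VR" using VR_sub unfolding csubspace_on_def by blast
lemma VR_add: "x \<in> VR \<Longrightarrow> y \<in> VR \<Longrightarrow> x + y \<in> VR" using VR_sub unfolding csubspace_on_def by blast
lemma VR_scaleC: "x \<in> VR \<Longrightarrow> c *\<^sub>C x \<in> VR" using VR_sub unfolding csubspace_on_def by blast
lemma VR_scaleR: "x \<in> VR \<Longrightarrow> r *\<^sub>R x \<in> VR" by (simp add: scaleR_scaleC VR_scaleC)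
lemma VR_uminus: "x \<in> VR \<Longrightarrow> - x \<in> VR" by (subst uminus_scaleC) (rule VR_scaleC)
lemma VR_diff: "x \<in> VR \<Longrightarrow> y \<in> VR \<Longrightarrow> x - y \<in> VR"
  by (simp only: diff_conv_add_uminus VR_add VR_uminus)

lemma R_add: "x \<in> VR \<Longrightarrow> y \<in> VR \<Longrightarrow> R (x + y) = R x + R y"
  using R_lin unfolding clinear_on_def by blast
lemma R_scaleC: "x \<in> VR \<Longrightarrow> R (c *\<^sub>C x) = c *\<^sub>C R x"
  using R_lin unfolding clinear_on_def by blast
lemma R_scaleR: "x \<in> VR \<Longrightarrow> R (r *\<^sub>R x) = r *\<^sub>R R x"
  by (simp add: scaleR_scaleC R_scaleC)
lemma R_zero: "R 0 = 0"
  using R_scaleC[OF VR_zero, of 0] by simp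
lemma R_uminus: "x \<in> VR \<Longrightarrow> R (- x) = - R x"
  by (subst (1 2) uminus_scaleC) (rule R_scaleC)
lemma R_diff: "x \<in> VR \<Longrightarrow> y \<in> VR \<Longrightarrow> R (x - y) = R x - R y"
  by (simp only: diff_conv_add_uminus R_add R_uminus VR_uminus)

lemma R_sym: "x \<in> VR \<Longrightarrow> y \<in> VR \<Longrightarrow> ip (R x) y = ip x (R y)"
  using R_sa unfolding self_adjoint_op_def by blast
lemma R_adj: "(\<forall>x\<in>VR. ip (R x) y = ip x z) \<Longrightarrow> y \<in> VR"
  using R_sa unfolding self_adjoint_op_def by blast
lemma VR_dense: "closure VR = UNIV"
  using R_sa unfolding self_adjoint_op_def densely_defined_def by blast

lemma VT_sub: "csubspace_on VT" and T_lin: "clinear_on VT T"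
  using T_sa unfolding self_adjoint_op_def lin_op_def by auto
lemma VT_zero: "0 \<in> VT" using VT_sub unfolding csubspace_on_def by blast
lemma VT_add: "x \<in> VT \<Longrightarrow> y \<in> VT \<Longrightarrow> x + y \<in> VT" using VT_sub unfolding csubspace_on_def by blast
lemma VT_scaleC: "x \<in> VT \<Longrightarrow> c *\<^sub>C x \<in> VT" using VT_sub unfolding csubspace_on_def by blast
lemma VT_scaleR: "x \<in> VT \<Longrightarrow> r *\<^sub>R x \<in> VT" by (simp add: scaleR_scaleC VT_scaleC)
lemma T_add: "x \<in> VT \<Longrightarrow> y \<in> VT \<Longrightarrow> T (x + y) = T x + T y"
  using T_lin unfolding clinear_on_def by blast
lemma T_scaleC: "x \<in> VT \<Longrightarrow> T (c *\<^sub>C x) = c *\<^sub>C T x"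
  using T_lin unfolding clinear_on_def by blast
lemma T_scaleR: "x \<in> VT \<Longrightarrow> T (r *\<^sub>R x) = r *\<^sub>R T x"
  by (simp add: scaleR_scaleC T_scaleC)
lemma T_adj: "(\<forall>x\<in>VT. ip (T x) y = ip x z) \<Longrightarrow> y \<in> VT"
  using T_sa unfolding self_adjoint_op_def by blast

lemma range_T_dense: "x \<in> closure (T ` VT)"
proof -
  let ?M = "T ` VT"
  have ne: "?M \<noteq> {}" using VT_zero by blast
  have mid: "\<forall>a\<in>?M. \<forall>b\<in>?M. (1/2) *\<^sub>R (a + b) \<in> ?M"
  proof (intro ballI)
    fix a b assume "a \<in> ?M" "b \<in> ?M"
    then obtain a' b' where "a' \<in> VT" "b' \<in> VT" "a = T a'" "b = T b'" by blast
    then show "(1/2) *\<^sub>R (a + b) \<in> ?M"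
      by (metis T_add T_scaleR VT_add VT_scaleR image_eqI)
  qed
  have addM: "\<forall>a\<in>?M. \<forall>b\<in>?M. a + b \<in> ?M"
    by (metis (no_types, lifting) T_add VT_add image_iff)
  have scM: "\<forall>a\<in>?M. \<forall>r. r *\<^sub>R a \<in> ?M"
    by (metis (no_types, lifting) T_scaleR VT_scaleR image_iff)
  obtain z f where zf: "\<forall>n. f n \<in> ?M" "f \<longlonglongrightarrow> z" "\<forall>m\<in>?M. norm (z - x) \<le> norm (m - x)"
    using proj_exists[OF ne mid, of x] by blast
  define w where "w = z - x"
  have orth: "ip (T v) w = 0" if v: "v \<in> VT" for v
  proof -
    have "Re (ip (T v) w) = 0" unfolding w_def
      using proj_orth[OF addM scM zf] v by blast
    moreover have "Re (ip (T (\<i> *\<^sub>C v)) w) = 0" unfolding w_def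
      using proj_orth[OF addM scM zf] VT_scaleC[OF v] by blast
    then have "Im (ip (T v) w) = 0"
      using v by (simp add: T_scaleC ip_scaleC_left)
    ultimately show ?thesis by (simp add: complex_eq_iff)
  qed
  have "w \<in> VT" by (rule T_adj[where z=0]) (use orth in simp)
  then have "a0 * (norm w)\<^sup>2 \<le> 0" using T_ge orth by fastforce
  then have "(norm w)\<^sup>2 \<le> 0" using a0_pos by (simp add: mult_le_0_iff)
  then have "w = 0" by simp
  then have "z = x" unfolding w_def by simp
  then show ?thesis using zf(1,2) by (metis closure_sequential)
qed

lemma F1: assumes x: "x \<in> VR" shows "a0 * (norm x)\<^sup>2 \<le> (norm (R x))\<^sup>2"
proof -
  obtain f where f: "\<forall>n. f n \<in> T ` VT" "f \<longlonglongrightarrow> x"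
    using range_T_dense[of x] unfolding closure_sequential by blast
  have "\<forall>n. \<exists>yy. yy \<in> VT \<and> f n = T yy" using f(1) by blast
  then have "\<exists>y. \<forall>n. y n \<in> VT \<and> f n = T (y n)" by (rule choice)
  then obtain y where y: "\<And>n. y n \<in> VT" "\<And>n. f n = T (y n)" by blast
  have bound: "sqrt a0 * cmod (ip x (f n)) \<le> norm (R x) * norm (f n)" for n
  proof -
    have yn: "y n \<in> VR" "R (y n) \<in> VR" using y(1)[of n] VT_eq by auto
    have Ty: "T (y n) = R (R (y n))" using T_eq y(1) by blast
    have e1: "ip x (f n) = ip (R x) (R (y n))"
      using R_sym[OF x yn(2)] y(2) Ty by simp
    have e2: "(norm (R (y n)))\<^sup>2 = Re (ip (T (y n)) (y n))"
    proof -
      have "(norm (R (y n)))\<^sup>2 = Re (ip (R (y n)) (R (y n)))" by (simp only: Re_ip_self)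
      also have "\<dots> = Re (ip (y n) (T (y n)))" using R_sym[OF yn] Ty by simp
      also have "\<dots> = Re (ip (T (y n)) (y n))" by (rule Re_ip_sym)
      finally show ?thesis .
    qed
    have c1: "Re (ip (T (y n)) (y n)) \<le> norm (T (y n)) * norm (y n)" by (rule Re_ip_le)
    have c2: "a0 * (norm (y n))\<^sup>2 \<le> Re (ip (T (y n)) (y n))" using T_ge y(1) by blast
    have c3: "a0 * norm (y n) \<le> norm (T (y n))"
    proof (cases "y n = 0")
      case True then show ?thesis by simp
    next
      case False
      have "a0 * (norm (y n) * norm (y n)) \<le> norm (T (y n)) * norm (y n)"
        using c1 c2 unfolding power2_eq_square by linarith
      then have "(a0 * norm (y n)) * norm (y n) \<le> norm (T (y n)) * norm (y n)"
        by (simp only: mult.assoc)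
      then show ?thesis by (rule mult_right_le_imp_le) (use False in simp)
    qed
    have "a0 * (norm (R (y n)))\<^sup>2 \<le> (norm (T (y n)))\<^sup>2"
    proof -
      have "a0 * (norm (R (y n)))\<^sup>2 \<le> a0 * (norm (T (y n)) * norm (y n))"
        using e2 c1 a0_pos by simp
      also have "\<dots> = norm (T (y n)) * (a0 * norm (y n))" by simp
      also have "\<dots> \<le> norm (T (y n)) * norm (T (y n))" using c3 by (simp add: mult_left_mono)
      finally show ?thesis by (simp add: power2_eq_square)
    qed
    then have "(sqrt a0 * norm (R (y n)))\<^sup>2 \<le> (norm (T (y n)))\<^sup>2"
      using a0_pos by (simp add: power_mult_distrib)
    then have c4: "sqrt a0 * norm (R (y n)) \<le> norm (f n)"
      using y(2) by (metis norm_ge_zero power2_le_imp_le)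
    have "sqrt a0 * cmod (ip x (f n)) \<le> sqrt a0 * (norm (R x) * norm (R (y n)))"
      unfolding e1 using a0_pos by (intro mult_left_mono cauchy_schwarz) auto
    also have "\<dots> = norm (R x) * (sqrt a0 * norm (R (y n)))" by simp
    also have "\<dots> \<le> norm (R x) * norm (f n)" using c4 by (simp add: mult_left_mono)
    finally show ?thesis .
  qed
  have l1: "(\<lambda>n. sqrt a0 * cmod (ip x (f n))) \<longlonglongrightarrow> sqrt a0 * cmod (ip x x)"
    by (intro tendsto_intros ip_tendsto_right f(2))
  have l2: "(\<lambda>n. norm (R x) * norm (f n)) \<longlonglongrightarrow> norm (R x) * norm x"
    by (intro tendsto_intros f(2))
  have "sqrt a0 * cmod (ip x x) \<le> norm (R x) * norm x"
    using l1 l2 bound by (intro LIMSEQ_le[OF l1 l2]) auto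
  then have A: "sqrt a0 * norm x * norm x \<le> norm (R x) * norm x"
    by (simp add: ip_self norm_mult power2_eq_square mult.assoc)
  show ?thesis
  proof (cases "x = 0")
    case True then show ?thesis by simp
  next
    case False
    then have "sqrt a0 * norm x \<le> norm (R x)" using A by simp
    then have "(sqrt a0 * norm x)\<^sup>2 \<le> (norm (R x))\<^sup>2"
      using a0_pos by (intro power_mono) auto
    then show ?thesis using a0_pos by (simp add: power_mult_distrib)
  qed
qed

end




context opsetup begin

definition Phi :: "'a \<times> 'a \<Rightarrow> 'a \<times> 'a" where "Phi z = (fst z, R (snd z))"
definition hd :: "'a \<times> 'a \<Rightarrow> 'a \<times> 'a \<Rightarrow> real" where "hd z w = dist (Phi z) (Phi w)"

lemma hnorm_Phi: "hnorm R z = norm (Phi z)"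
  by (simp add: hnorm_def Phi_def norm_Pair)

lemma Hsp_iff: "z \<in> Hsp VR \<longleftrightarrow> snd z \<in> VR"
  by (cases z) (simp add: Hsp_def)
lemma Hsp_add: "z \<in> Hsp VR \<Longrightarrow> w \<in> Hsp VR \<Longrightarrow> z + w \<in> Hsp VR"
  by (simp add: Hsp_iff VR_add)
lemma Hsp_diff: "z \<in> Hsp VR \<Longrightarrow> w \<in> Hsp VR \<Longrightarrow> z - w \<in> Hsp VR"
  by (simp add: Hsp_iff VR_diff)
lemma Hsp_scaleR: "z \<in> Hsp VR \<Longrightarrow> r *\<^sub>R z \<in> Hsp VR"
  by (simp add: Hsp_iff VR_scaleR)
lemma Hsp_zero: "0 \<in> Hsp VR"
  by (simp add: Hsp_iff VR_zero)
lemma Hsp_uminus: "z \<in> Hsp VR \<Longrightarrow> - z \<in> Hsp VR"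
  by (simp add: Hsp_iff VR_uminus)

lemma Phi_add: "z \<in> Hsp VR \<Longrightarrow> w \<in> Hsp VR \<Longrightarrow> Phi (z + w) = Phi z + Phi w"
  by (simp add: Phi_def Hsp_iff R_add)
lemma Phi_diff: "z \<in> Hsp VR \<Longrightarrow> w \<in> Hsp VR \<Longrightarrow> Phi (z - w) = Phi z - Phi w"
  by (simp add: Phi_def Hsp_iff R_diff)
lemma Phi_scaleR: "z \<in> Hsp VR \<Longrightarrow> Phi (r *\<^sub>R z) = r *\<^sub>R Phi z"
  by (simp add: Phi_def Hsp_iff R_scaleR)
lemma Phi_zero: "Phi 0 = 0"
  by (simp add: Phi_def R_zero zero_prod_def)

lemma hn_diff: "z \<in> Hsp VR \<Longrightarrow> w \<in> Hsp VR \<Longrightarrow> hnorm R (z - w) = hd z w"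
  by (simp add: hnorm_Phi hd_def Phi_diff dist_norm)
lemma hn_triangle: "z \<in> Hsp VR \<Longrightarrow> w \<in> Hsp VR \<Longrightarrow> hnorm R (z + w) \<le> hnorm R z + hnorm R w"
  by (simp add: hnorm_Phi Phi_add norm_triangle_ineq)
lemma hn_commute: "z \<in> Hsp VR \<Longrightarrow> w \<in> Hsp VR \<Longrightarrow> hnorm R (z - w) = hnorm R (w - z)"
  by (simp add: hn_diff hd_def dist_commute)
lemma hn_scaleR: "z \<in> Hsp VR \<Longrightarrow> hnorm R (r *\<^sub>R z) = \<bar>r\<bar> * hnorm R z"
  by (simp add: hnorm_Phi Phi_scaleR)
lemma hn_nonneg: "hnorm R z \<ge> 0"
  by (simp add: hnorm_Phi)
lemma hn_zero: "hnorm R 0 = 0"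
  by (simp add: hnorm_Phi Phi_zero)
lemma hn_fst: "norm (fst z) \<le> hnorm R z"
  by (simp add: hnorm_def real_le_rsqrt)
lemma hn_snd: "norm (R (snd z)) \<le> hnorm R z"
  by (simp add: hnorm_def real_le_rsqrt)
lemma hn_sq: "(hnorm R z)\<^sup>2 = (norm (fst z))\<^sup>2 + (norm (R (snd z)))\<^sup>2"
  by (simp add: hnorm_def)

lemma norm_le_R: "x \<in> VR \<Longrightarrow> sqrt a0 * norm x \<le> norm (R x)"
proof -
  assume x: "x \<in> VR"
  have "(sqrt a0 * norm x)\<^sup>2 \<le> (norm (R x))\<^sup>2"
    using F1[OF x] a0_pos by (simp add: power_mult_distrib)
  then show ?thesis by (rule power2_le_imp_le) simp
qed

lemma R_inj: "x \<in> VR \<Longrightarrow> R x = 0 \<Longrightarrow> x = 0"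
  using norm_le_R[of x] a0_pos by (simp add: mult_le_0_iff)

lemma hn_zero_iff: "z \<in> Hsp VR \<Longrightarrow> hnorm R z = 0 \<longleftrightarrow> z = 0"
  by (cases z) (auto simp: hnorm_Phi Phi_def Hsp_iff R_inj R_zero zero_prod_def)

lemma Phi_inj: "z \<in> Hsp VR \<Longrightarrow> w \<in> Hsp VR \<Longrightarrow> Phi z = Phi w \<Longrightarrow> z = w"
  using hn_zero_iff[of "z - w"] Hsp_diff by (simp add: hnorm_Phi Phi_diff)

lemma R_closed:
  assumes c: "\<forall>n. c n \<in> VR" "c \<longlonglongrightarrow> c0" and b: "(\<lambda>n. R (c n)) \<longlonglongrightarrow> b"
  shows "c0 \<in> VR \<and> R c0 = b"
proof -
  have eq: "ip (R v) c0 = ip v b" if v: "v \<in> VR" for v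
  proof -
    have "(\<lambda>n. ip (R v) (c n)) \<longlonglongrightarrow> ip (R v) c0" by (rule ip_tendsto_right[OF c(2)])
    moreover have "(\<lambda>n. ip (R v) (c n)) = (\<lambda>n. ip v (R (c n)))"
      using R_sym v c(1) by blast
    moreover have "(\<lambda>n. ip v (R (c n))) \<longlonglongrightarrow> ip v b" by (rule ip_tendsto_right[OF b])
    ultimately show ?thesis using LIMSEQ_unique by metis
  qed
  then have c0: "c0 \<in> VR" by (intro R_adj[where z=b]) blast
  have "\<forall>v\<in>VR. ip v (R c0 - b) = 0"
    using eq R_sym[OF _ c0] by (simp add: ip_diff_right)
  then have "R c0 - b = 0" by (intro ortho_dense_zero[OF VR_dense]) blast
  then show ?thesis using c0 by simp
qed

lemma Hm: "Metric_space (Hsp VR) hd"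
proof
  fix x y z
  show "0 \<le> hd x y" by (simp add: hd_def)
  show "hd x y = hd y x" by (simp add: hd_def dist_commute)
  show "x \<in> Hsp VR \<Longrightarrow> y \<in> Hsp VR \<Longrightarrow> (hd x y = 0) = (x = y)"
    unfolding hd_def dist_eq_0_iff by (metis Phi_inj)
  show "hd x z \<le> hd x y + hd y z" by (simp add: hd_def dist_triangle)
qed

lemma Hm_complete: "Metric_space.mcomplete (Hsp VR) hd"
proof -
  interpret Hm: Metric_space "Hsp VR" hd by (rule Hm)
  show ?thesis unfolding Hm.mcomplete_def
  proof (intro allI impI)
    fix \<sigma> assume "Hm.MCauchy \<sigma>"
    then have sig: "\<And>n. \<sigma> n \<in> Hsp VR"
      and cau: "\<And>e. e > 0 \<Longrightarrow> \<exists>N. \<forall>n n'. N \<le> n \<longrightarrow> N \<le> n' \<longrightarrow> hd (\<sigma> n) (\<sigma> n') < e"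
      unfolding Hm.MCauchy_def by auto
    have "Cauchy (\<lambda>n. Phi (\<sigma> n))"
      using cau unfolding Cauchy_def hd_def by blast
    then obtain p where p: "(\<lambda>n. Phi (\<sigma> n)) \<longlonglongrightarrow> p" using Cauchy_convergent_iff convergent_def by blast
    have lim2: "(\<lambda>n. R (snd (\<sigma> n))) \<longlonglongrightarrow> snd p"
      using tendsto_snd[OF p] by (simp add: Phi_def)
    have lim1: "(\<lambda>n. fst (\<sigma> n)) \<longlonglongrightarrow> fst p"
      using tendsto_fst[OF p] by (simp add: Phi_def)
    have "Cauchy (\<lambda>n. snd (\<sigma> n))"
    proof (rule metric_CauchyI)
      fix e :: real assume e: "e > 0"
      obtain N where N: "\<forall>n n'. N \<le> n \<longrightarrow> N \<le> n' \<longrightarrow> hd (\<sigma> n) (\<sigma> n') < sqrt a0 * e"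
        using cau[of "sqrt a0 * e"] e a0_pos by auto
      show "\<exists>N. \<forall>m\<ge>N. \<forall>n\<ge>N. dist (snd (\<sigma> m)) (snd (\<sigma> n)) < e"
      proof (intro exI allI impI)
        fix m n assume mn: "N \<le> m" "N \<le> n"
        have s: "snd (\<sigma> m) \<in> VR" "snd (\<sigma> n) \<in> VR" using sig Hsp_iff by auto
        have "sqrt a0 * norm (snd (\<sigma> m) - snd (\<sigma> n)) \<le> norm (R (snd (\<sigma> m) - snd (\<sigma> n)))"
          by (rule norm_le_R) (use s in \<open>simp add: VR_diff\<close>)
        also have "\<dots> = norm (R (snd (\<sigma> m)) - R (snd (\<sigma> n)))" using s by (simp add: R_diff)
        also have "\<dots> \<le> hd (\<sigma> m) (\<sigma> n)"
          unfolding hd_def Phi_def dist_norm by (simp add: norm_Pair real_le_rsqrt)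
        also have "\<dots> < sqrt a0 * e" using N mn by blast
        finally show "dist (snd (\<sigma> m)) (snd (\<sigma> n)) < e" using a0_pos by (simp add: dist_norm)
      qed
    qed
    then obtain c where c: "(\<lambda>n. snd (\<sigma> n)) \<longlonglongrightarrow> c" using Cauchy_convergent_iff convergent_def by blast
    have cR: "c \<in> VR \<and> R c = snd p"
      by (rule R_closed[OF _ c lim2]) (use sig Hsp_iff in auto)
    define l where "l = (fst p, c)"
    have l: "l \<in> Hsp VR" "Phi l = p" using cR by (auto simp: l_def Hsp_iff Phi_def)
    show "\<exists>x. limitin Hm.mtopology \<sigma> x sequentially"
    proof (intro exI[of _ l])
      show "limitin Hm.mtopology \<sigma> l sequentially"
        unfolding Hm.limitin_metric
      proof (intro conjI allI impI l)
        fix e :: real assume "e > 0"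
        then have "\<forall>\<^sub>F n in sequentially. dist (Phi (\<sigma> n)) p < e" using p \<open>e > 0\<close> unfolding tendsto_iff by blast
        then show "\<forall>\<^sub>F n in sequentially. \<sigma> n \<in> Hsp VR \<and> hd (\<sigma> n) l < e"
          using sig l by (simp add: hd_def)
      qed
    qed
  qed
qed

end




context opsetup begin

lemma hn_diff_le: "a \<in> Hsp VR \<Longrightarrow> b \<in> Hsp VR \<Longrightarrow> hnorm R (a - b) \<le> hnorm R a + hnorm R b"
proof -
  assume ab: "a \<in> Hsp VR" "b \<in> Hsp VR"
  have "hnorm R (a - b) = hnorm R (a + (-1) *\<^sub>R b)" by simp
  also have "\<dots> \<le> hnorm R a + hnorm R ((-1) *\<^sub>R b)" using ab by (intro hn_triangle Hsp_scaleR)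
  also have "hnorm R ((-1) *\<^sub>R b) = hnorm R b" using ab hn_scaleR[of b "-1"] by simp
  finally show ?thesis .
qed

lemma hd_eq: "z \<in> Hsp VR \<Longrightarrow> w \<in> Hsp VR \<Longrightarrow> hd z w = hnorm R (z - w)"
  by (simp add: hn_diff)

lemma ubp:
  fixes L :: "nat \<Rightarrow> 'a \<times> 'a \<Rightarrow> 'a \<times> 'a"
  assumes inH: "\<And>n z. z \<in> Hsp VR \<Longrightarrow> L n z \<in> Hsp VR"
    and addL: "\<And>n z w. z \<in> Hsp VR \<Longrightarrow> w \<in> Hsp VR \<Longrightarrow> L n (z + w) = L n z + L n w"
    and scL: "\<And>n r z. z \<in> Hsp VR \<Longrightarrow> L n (r *\<^sub>R z) = r *\<^sub>R L n z"
    and bdL: "\<And>n. \<exists>K. \<forall>z\<in>Hsp VR. hnorm R (L n z) \<le> K * hnorm R z"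
    and pw: "\<And>z. z \<in> Hsp VR \<Longrightarrow> \<exists>B. \<forall>n. hnorm R (L n z) \<le> B"
  shows "\<exists>K. \<forall>n. \<forall>z\<in>Hsp VR. hnorm R (L n z) \<le> K * hnorm R z"
proof -
  interpret Hm: Metric_space "Hsp VR" hd by (rule Hm)
  have L0: "L n 0 = 0" for n using scL[OF Hsp_zero, of n 0] by simp
  have Ldiff: "L n (z - w) = L n z - L n w" if "z \<in> Hsp VR" "w \<in> Hsp VR" for n z w
  proof -
    have "L n (z - w) = L n (z + (-1) *\<^sub>R w)" by simp
    also have "\<dots> = L n z + (-1) *\<^sub>R L n w" using that by (simp only: addL Hsp_scaleR scL)
    finally show ?thesis by simp
  qed
  define F where "F N = {z \<in> Hsp VR. \<forall>n. hnorm R (L n z) \<le> real N}" for N :: nat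
  have closedF: "closedin Hm.mtopology (F N)" for N
    unfolding Hm.metric_closedin_iff_sequentially_closed
  proof (intro conjI allI impI)
    show "F N \<subseteq> Hsp VR" unfolding F_def by blast
    fix \<sigma> l assume a: "range \<sigma> \<subseteq> F N \<and> limitin Hm.mtopology \<sigma> l sequentially"
    then have l: "l \<in> Hsp VR" and ev: "\<And>e. e > 0 \<Longrightarrow> \<forall>\<^sub>F k in sequentially. \<sigma> k \<in> Hsp VR \<and> hd (\<sigma> k) l < e"
      unfolding Hm.limitin_metric by auto
    have "hnorm R (L n l) \<le> real N" for n
    proof (rule field_le_epsilon)
      fix e :: real assume e: "e > 0"
      obtain K where K: "\<forall>z\<in>Hsp VR. hnorm R (L n z) \<le> K * hnorm R z" using bdL by blast
      define e' where "e' = e / (\<bar>K\<bar> + 1)"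
      have e': "e' > 0" using e by (simp add: e'_def)
      obtain k where k: "\<sigma> k \<in> Hsp VR" "hd (\<sigma> k) l < e'"
        using eventually_happens'[OF _ ev[OF e']] by auto
      have sk: "\<sigma> k \<in> F N" using a by blast
      have "L n l = L n (\<sigma> k) + L n (l - \<sigma> k)" using Ldiff[OF l k(1)] by simp
      then have "hnorm R (L n l) \<le> hnorm R (L n (\<sigma> k)) + hnorm R (L n (l - \<sigma> k))"
        using hn_triangle inH k(1) l Hsp_diff by metis
      also have "hnorm R (L n (\<sigma> k)) \<le> real N" using sk unfolding F_def by blast
      also have "hnorm R (L n (l - \<sigma> k)) \<le> K * hnorm R (l - \<sigma> k)"
        using K l k(1) Hsp_diff by blast
      also have "\<dots> \<le> \<bar>K\<bar> * hnorm R (l - \<sigma> k)" by (simp add: hn_nonneg mult_right_mono)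
      also have "hnorm R (l - \<sigma> k) = hd (\<sigma> k) l" using hn_commute hd_eq k(1) l by metis
      also have "\<bar>K\<bar> * hd (\<sigma> k) l \<le> \<bar>K\<bar> * e'" using k(2) by (simp add: mult_left_mono)
      also have "\<bar>K\<bar> * e' \<le> e" unfolding e'_def using e by (simp add: field_simps)
      finally show "hnorm R (L n l) \<le> real N + e" by simp
    qed
    then show "l \<in> F N" using l unfolding F_def by blast
  qed
  have unionF: "\<Union> (range F) = Hsp VR"
  proof
    show "\<Union> (range F) \<subseteq> Hsp VR" unfolding F_def by blast
    show "Hsp VR \<subseteq> \<Union> (range F)"
    proof
      fix z assume z: "z \<in> Hsp VR"
      obtain B where B: "\<forall>n. hnorm R (L n z) \<le> B" using pw[OF z] by blast
      have "B \<le> real (nat \<lceil>B\<rceil>)" by linarith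
      then have "z \<in> F (nat \<lceil>B\<rceil>)" using B z unfolding F_def by (auto intro: order_trans)
      then show "z \<in> \<Union> (range F)" by blast
    qed
  qed
  have "\<exists>N. Hm.mtopology interior_of F N \<noteq> {}"
  proof (rule ccontr)
    assume "\<not> ?thesis"
    then have "Hm.mtopology interior_of \<Union> (range F) = {}"
      by (intro Hm.metric_Baire_category_alt Hm_complete) (auto simp: closedF)
    moreover have "Hm.mtopology interior_of Hsp VR = Hsp VR"
      using interior_of_topspace[of Hm.mtopology] by simp
    ultimately show False using unionF Hsp_zero by simp
  qed
  then obtain N z0 where z0: "z0 \<in> Hm.mtopology interior_of F N" by blast
  then obtain r where r: "r > 0" "Hm.mball z0 r \<subseteq> Hm.mtopology interior_of F N"
  proof -
    have "openin Hm.mtopology (Hm.mtopology interior_of F N)" by (rule openin_interior_of)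
    then have "\<forall>x. x \<in> Hm.mtopology interior_of F N \<longrightarrow> (\<exists>r>0. Hm.mball x r \<subseteq> Hm.mtopology interior_of F N)"
      unfolding Hm.openin_mtopology by (rule conjunct2)
    then have "\<exists>r>0. Hm.mball z0 r \<subseteq> Hm.mtopology interior_of F N" using z0 by (simp only: imp_conjL)
    then show ?thesis by (elim exE conjE) (rule that)
  qed
  have sub: "Hm.mball z0 r \<subseteq> F N" using r(2) interior_of_subset[of Hm.mtopology "F N"] by (rule subset_trans)
  have z0F: "z0 \<in> F N" using z0 interior_of_subset[of Hm.mtopology "F N"] by (rule rev_subsetD)
  then have z0H: "z0 \<in> Hsp VR" unfolding F_def by blast
  have small: "hnorm R (L n z) \<le> 2 * real N" if z: "z \<in> Hsp VR" "hnorm R z < r" for n z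
  proof -
    have "hd z0 (z0 + z) = hnorm R z"
      using hd_eq[OF z0H Hsp_add[OF z0H z(1)]] hn_commute[OF z0H Hsp_add[OF z0H z(1)]] by simp
    then have "z0 + z \<in> Hm.mball z0 r" using z z0H Hsp_add by simp
    then have "z0 + z \<in> F N" using sub by blast
    then have a1: "hnorm R (L n (z0 + z)) \<le> real N" unfolding F_def by blast
    from z0F have a2: "hnorm R (L n z0) \<le> real N" unfolding F_def by blast
    have "L n z = L n (z0 + z) - L n z0" using addL[OF z0H z(1)] by simp
    then have "hnorm R (L n z) \<le> hnorm R (L n (z0 + z)) + hnorm R (L n z0)"
      using hn_diff_le inH z0H z(1) Hsp_add by metis
    then show ?thesis using a1 a2 by simp
  qed
  show ?thesis
  proof (intro exI[of _ "4 * real N / r"] allI ballI)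
    fix n z assume z: "z \<in> Hsp VR"
    show "hnorm R (L n z) \<le> 4 * real N / r * hnorm R z"
    proof (cases "hnorm R z = 0")
      case True
      then have "z = 0" using hn_zero_iff z by blast
      then show ?thesis by (simp add: L0 hn_zero)
    next
      case False
      then have hz: "hnorm R z > 0" using hn_nonneg[of z] by simp
      define s where "s = r / (2 * hnorm R z)"
      have s: "s > 0" using r hz by (simp add: s_def)
      have "hnorm R (s *\<^sub>R z) = r / 2" using z hz s r(1) by (simp add: hn_scaleR s_def)
      then have "hnorm R (L n (s *\<^sub>R z)) \<le> 2 * real N"
        using small[OF Hsp_scaleR[OF z]] r by simp
      then have "s * hnorm R (L n z) \<le> 2 * real N"
        using z s inH by (simp add: scL hn_scaleR)
      then have "hnorm R (L n z) \<le> 2 * real N / s" using s by (simp add: field_simps)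
      also have "\<dots> = 4 * real N / r * hnorm R z" using r hz by (simp add: s_def field_simps)
      finally show ?thesis .
    qed
  qed
qed

end




lemma at_right0_eps:
  fixes g :: "real \<Rightarrow> real"
  assumes "(g \<longlongrightarrow> 0) (at_right 0)" "e > 0"
  shows "\<exists>b>0. \<forall>h. 0 < h \<and> h < b \<longrightarrow> g h < e"
proof -
  have "\<forall>\<^sub>F h in at_right 0. dist (g h) 0 < e" using assms unfolding tendsto_iff by blast
  then obtain b where "b > 0" "\<forall>h>0. h < b \<longrightarrow> dist (g h) 0 < e"
    unfolding eventually_at_right_field by blast
  then show ?thesis by (intro exI[of _ b]) auto
qed

lemma at_right0_of_eps:
  fixes g :: "real \<Rightarrow> real"
  assumes "\<And>e. e > 0 \<Longrightarrow> \<exists>b>0. \<forall>h. 0 < h \<and> h < b \<longrightarrow> \<bar>g h\<bar> < e"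
  shows "(g \<longlongrightarrow> 0) (at_right 0)"
  unfolding tendsto_iff eventually_at_right_field
proof (intro allI impI)
  fix e :: real assume "e > 0"
  then obtain b where "b > 0" "\<forall>h. 0 < h \<and> h < b \<longrightarrow> \<bar>g h\<bar> < e" using assms by blast
  then show "\<exists>b>0. \<forall>y>0. y < b \<longrightarrow> dist (g y) 0 < e" by auto
qed

locale sgsetup = opsetup +
  fixes Tsg :: "real \<Rightarrow> 'a \<times> 'a \<Rightarrow> 'a \<times> 'a"
  assumes Tsg_gen: "generated_by VR R Tsg (dom_calA VR R S Dp) (calA R S Dp)"
begin

abbreviation "H \<equiv> Hsp VR"
abbreviation "Dom \<equiv> dom_calA VR R S Dp"
abbreviation "G \<equiv> calA R S Dp"
abbreviation "hn \<equiv> hnorm R"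

lemma C0: "C0_semigroup VR R Tsg" using Tsg_gen unfolding generated_by_def by blast

lemma T_in: "t \<ge> 0 \<Longrightarrow> z \<in> H \<Longrightarrow> Tsg t z \<in> H"
  using C0 unfolding C0_semigroup_def by blast
lemma T_add: "t \<ge> 0 \<Longrightarrow> z \<in> H \<Longrightarrow> w \<in> H \<Longrightarrow> Tsg t (z + w) = Tsg t z + Tsg t w"
  using C0 unfolding C0_semigroup_def by blast
lemma T_pscaleC: "t \<ge> 0 \<Longrightarrow> z \<in> H \<Longrightarrow> Tsg t (pscaleC c z) = pscaleC c (Tsg t z)"
  using C0 unfolding C0_semigroup_def by blast
lemma T_bd: "t \<ge> 0 \<Longrightarrow> \<exists>K. \<forall>z\<in>H. hn (Tsg t z) \<le> K * hn z"
  using C0 unfolding C0_semigroup_def by blast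
lemma T_0: "z \<in> H \<Longrightarrow> Tsg 0 z = z"
  using C0 unfolding C0_semigroup_def by blast
lemma T_semi: "s \<ge> 0 \<Longrightarrow> t \<ge> 0 \<Longrightarrow> z \<in> H \<Longrightarrow> Tsg (s + t) z = Tsg s (Tsg t z)"
  using C0 unfolding C0_semigroup_def by blast
lemma T_cont0: "z \<in> H \<Longrightarrow> ((\<lambda>t. hn (Tsg t z - z)) \<longlongrightarrow> 0) (at_right 0)"
  using C0 unfolding C0_semigroup_def by blast

lemma Dom_H: "z \<in> Dom \<Longrightarrow> z \<in> H" using Tsg_gen unfolding generated_by_def by blast
lemma G_H: "z \<in> Dom \<Longrightarrow> G z \<in> H" using Tsg_gen unfolding generated_by_def by blast
lemma Dom_eq: "Dom = {z \<in> H. \<exists>y\<in>H. ((\<lambda>t. hn ((1 / t) *\<^sub>R (Tsg t z - z) - y)) \<longlongrightarrow> 0) (at_right 0)}"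
  using Tsg_gen unfolding generated_by_def by blast
lemma G_lim: "z \<in> Dom \<Longrightarrow> ((\<lambda>t. hn ((1 / t) *\<^sub>R (Tsg t z - z) - G z)) \<longlongrightarrow> 0) (at_right 0)"
  using Tsg_gen unfolding generated_by_def by blast

lemma pscaleC_real: "pscaleC (complex_of_real r) z = r *\<^sub>R z"
  by (cases z) (simp add: pscaleC_def scaleR_scaleC)

lemma T_scaleR: "t \<ge> 0 \<Longrightarrow> z \<in> H \<Longrightarrow> Tsg t (r *\<^sub>R z) = r *\<^sub>R Tsg t z"
  using T_pscaleC[of t z "complex_of_real r"] by (simp add: pscaleC_real)
lemma T_zero: "t \<ge> 0 \<Longrightarrow> Tsg t 0 = 0"
  using T_scaleR[OF _ Hsp_zero, of t 0] by simp
lemma T_diff: "t \<ge> 0 \<Longrightarrow> z \<in> H \<Longrightarrow> w \<in> H \<Longrightarrow> Tsg t (z - w) = Tsg t z - Tsg t w"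
proof -
  assume a: "t \<ge> 0" "z \<in> H" "w \<in> H"
  have "Tsg t (z - w) = Tsg t (z + (-1) *\<^sub>R w)" by simp
  also have "\<dots> = Tsg t z + (-1) *\<^sub>R Tsg t w" using a by (simp only: T_add Hsp_scaleR T_scaleR)
  finally show ?thesis by simp
qed

lemma local_bound: "\<exists>\<delta>>0. \<exists>M. \<forall>s\<in>{0..\<delta>}. \<forall>z\<in>H. hn (Tsg s z) \<le> M * hn z"
proof (rule ccontr)
  assume neg: "\<not> ?thesis"
  have "\<forall>n::nat. \<exists>s z. s \<in> {0..1 / (real n + 1)} \<and> z \<in> H \<and> hn (Tsg s z) > (real n + 1) * hn z"
  proof
    fix n :: nat
    have "\<not> (\<forall>s\<in>{0..1 / (real n + 1)}. \<forall>z\<in>H. hn (Tsg s z) \<le> (real n + 1) * hn z)"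
      using neg by (metis divide_pos_pos of_nat_add of_nat_0_less_iff zero_less_one add_pos_pos
          of_nat_0_le_iff le_add_same_cancel2 less_add_same_cancel2 order_less_le_trans)
    then show "\<exists>s z. s \<in> {0..1 / (real n + 1)} \<and> z \<in> H \<and> hn (Tsg s z) > (real n + 1) * hn z"
      by (meson not_le)
  qed
  then obtain s zz where sz: "\<And>n. s n \<in> {0..1 / (real n + 1)}" "\<And>n. zz n \<in> H"
      "\<And>n. hn (Tsg (s n) (zz n)) > (real n + 1) * hn (zz n)"
    by metis
  have s0: "s n \<ge> 0" for n using sz(1)[of n] by simp
  have "\<exists>K. \<forall>n. \<forall>z\<in>H. hn (Tsg (s n) z) \<le> K * hn z"
  proof (rule ubp)
    show "\<And>n z. z \<in> H \<Longrightarrow> Tsg (s n) z \<in> H" using T_in s0 by blast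
    show "\<And>n z w. z \<in> H \<Longrightarrow> w \<in> H \<Longrightarrow> Tsg (s n) (z + w) = Tsg (s n) z + Tsg (s n) w"
      using T_add s0 by blast
    show "\<And>n r z. z \<in> H \<Longrightarrow> Tsg (s n) (r *\<^sub>R z) = r *\<^sub>R Tsg (s n) z" using T_scaleR s0 by blast
    show "\<And>n. \<exists>K. \<forall>z\<in>H. hn (Tsg (s n) z) \<le> K * hn z" using T_bd s0 by blast
    fix z assume z: "z \<in> H"
    obtain b where b: "b > 0" "\<forall>h. 0 < h \<and> h < b \<longrightarrow> hn (Tsg h z - z) < 1"
      using at_right0_eps[OF T_cont0[OF z], of 1] by auto
    obtain N0 :: nat where N0: "1 / b < real N0" using reals_Archimedean2 by blast
    define B where "B = max (Max (insert 0 ((\<lambda>n. hn (Tsg (s n) z)) ` {..<N0}))) (1 + hn z)"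
    show "\<exists>B. \<forall>n. hn (Tsg (s n) z) \<le> B"
    proof (intro exI allI)
      fix n
      show "hn (Tsg (s n) z) \<le> B"
      proof (cases "n < N0")
        case True
        then have "hn (Tsg (s n) z) \<le> Max (insert 0 ((\<lambda>n. hn (Tsg (s n) z)) ` {..<N0}))"
          by (intro Max_ge) auto
        then show ?thesis unfolding B_def by linarith
      next
        case False
        have "s n \<le> 1 / (real n + 1)" using sz(1)[of n] by simp
        also have "\<dots> < b"
        proof -
          have "1 / b < real n + 1" using N0 False by linarith
          then show ?thesis using b(1) by (simp add: field_simps)
        qed
        finally have sb: "s n < b" .
        show ?thesis
        proof (cases "s n = 0")
          case True then show ?thesis using T_0[OF z] unfolding B_def by simp
        next
          case False
          then have "hn (Tsg (s n) z - z) < 1" using b(2) sb s0[of n] by simp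
          moreover have "hn (Tsg (s n) z) \<le> hn (Tsg (s n) z - z) + hn z"
            using hn_triangle[OF Hsp_diff[OF T_in[OF s0 z] z] z] by simp
          ultimately show ?thesis unfolding B_def by linarith
        qed
      qed
    qed
  qed
  then obtain K where K: "\<forall>n. \<forall>z\<in>H. hn (Tsg (s n) z) \<le> K * hn z" by blast
  define n where "n = nat \<lceil>K\<rceil>"
  have Kn: "K < real n + 1" unfolding n_def by linarith
  have a: "hn (Tsg (s n) (zz n)) > (real n + 1) * hn (zz n)" by (rule sz(3))
  have b: "hn (Tsg (s n) (zz n)) \<le> K * hn (zz n)" using K sz(2) by blast
  show False
  proof (cases "hn (zz n) = 0")
    case True
    then have "zz n = 0" using hn_zero_iff sz(2) by blast
    then show False using a T_zero[OF s0[of n]] by (simp add: hn_zero)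
  next
    case False
    then have "hn (zz n) > 0" using hn_nonneg[of "zz n"] by simp
    then have "(real n + 1) * hn (zz n) \<ge> K * hn (zz n)" using Kn by (simp add: mult_right_mono)
    then show False using a b by linarith
  qed
qed

lemma bound_on: "\<exists>M\<ge>1. \<forall>s\<in>{0..t}. \<forall>z\<in>H. hn (Tsg s z) \<le> M * hn z"
proof -
  obtain \<delta> M where dM: "\<delta> > 0" "\<forall>s\<in>{0..\<delta>}. \<forall>z\<in>H. hn (Tsg s z) \<le> M * hn z"
    using local_bound by blast
  define M1 where "M1 = max M 1"
  have M1: "M1 \<ge> 1" by (simp add: M1_def)
  have dM1: "hn (Tsg s z) \<le> M1 * hn z" if "s \<in> {0..\<delta>}" "z \<in> H" for s z
  proof -
    have "hn (Tsg s z) \<le> M * hn z" using dM that by blast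
    also have "\<dots> \<le> M1 * hn z" by (simp add: M1_def hn_nonneg mult_right_mono)
    finally show ?thesis .
  qed
  have P: "\<forall>s\<in>{0..real k * \<delta>}. \<forall>z\<in>H. hn (Tsg s z) \<le> M1 ^ (k + 1) * hn z" for k
  proof (induction k)
    case 0
    have "1 * hn z \<le> M1 * hn z" for z by (rule mult_right_mono[OF M1 hn_nonneg])
    then show ?case using T_0 by simp
  next
    case (Suc k)
    show ?case
    proof (intro ballI)
      fix s z assume s: "s \<in> {0..real (Suc k) * \<delta>}" and z: "z \<in> H"
      have pow: "M1 ^ (k + 1) \<le> M1 ^ (Suc k + 1)" using M1 by (simp add: power_increasing)
      show "hn (Tsg s z) \<le> M1 ^ (Suc k + 1) * hn z"
      proof (cases "s \<le> \<delta>")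
        case True
        then have "hn (Tsg s z) \<le> M1 * hn z" using dM1 s z by simp
        also have "M1 \<le> M1 ^ (Suc k + 1)" using M1
          by (metis One_nat_def le_add2 power_increasing power_one_right)
        then have "M1 * hn z \<le> M1 ^ (Suc k + 1) * hn z" by (simp add: hn_nonneg mult_right_mono)
        finally show ?thesis .
      next
        case False
        then have s': "s - \<delta> \<in> {0..real k * \<delta>}" using s by (auto simp: algebra_simps)
        have "Tsg s z = Tsg \<delta> (Tsg (s - \<delta>) z)" using T_semi[of \<delta> "s - \<delta>" z] dM(1) False z by simp
        then have "hn (Tsg s z) \<le> M1 * hn (Tsg (s - \<delta>) z)"
          using dM1[of \<delta> "Tsg (s - \<delta>) z"] T_in[of "s - \<delta>" z] dM(1) s' z by simp
        also have "\<dots> \<le> M1 * (M1 ^ (k + 1) * hn z)"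
          using Suc.IH s' z M1 by (simp add: mult_left_mono)
        finally show ?thesis by (simp add: mult.assoc)
      qed
    qed
  qed
  obtain k :: nat where k: "t / \<delta> < real k" using reals_Archimedean2 by blast
  have "t \<le> real k * \<delta>" using k dM(1) by (simp add: field_simps)
  then have "\<forall>s\<in>{0..t}. \<forall>z\<in>H. hn (Tsg s z) \<le> M1 ^ (k + 1) * hn z" using P[of k] by auto
  moreover have "M1 ^ (k + 1) \<ge> 1" using M1 by (rule one_le_power)
  ultimately show ?thesis by blast
qed

end




context sgsetup begin

lemma T_comm: "s \<ge> 0 \<Longrightarrow> t \<ge> 0 \<Longrightarrow> z \<in> H \<Longrightarrow> Tsg s (Tsg t z) = Tsg t (Tsg s z)"
  using T_semi[of s t z] T_semi[of t s z] by (simp add: add.commute)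

lemma quot_comm:
  assumes "t \<ge> 0" "h > 0" "z \<in> H"
  shows "(1 / h) *\<^sub>R (Tsg h (Tsg t z) - Tsg t z) = Tsg t ((1 / h) *\<^sub>R (Tsg h z - z))"
proof -
  have "Tsg h (Tsg t z) = Tsg t (Tsg h z)" using T_comm assms by simp
  then show ?thesis using assms
    by (simp add: T_scaleR T_diff T_in Hsp_diff)
qed

lemma lim_le_zero:
  fixes c :: real and f :: "real \<Rightarrow> real"
  assumes "(f \<longlongrightarrow> 0) (at_right 0)" "\<forall>h>0. c \<le> f h"
  shows "c \<le> 0"
proof (rule tendsto_le[OF _ assms(1) tendsto_const])
  show "at_right (0::real) \<noteq> bot" by simp
  show "\<forall>\<^sub>F x in at_right 0. c \<le> f x"
    using assms(2) eventually_at_right_less[of "0::real"] by (auto elim: eventually_mono)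
qed

lemma Dom_inv:
  assumes z: "z \<in> Dom" and t: "t \<ge> 0"
  shows "Tsg t z \<in> Dom \<and> G (Tsg t z) = Tsg t (G z)"
proof -
  have zH: "z \<in> H" using Dom_H z by blast
  have GzH: "G z \<in> H" using G_H z by blast
  define y where "y = Tsg t z"
  have yH: "y \<in> H" using T_in t zH by (simp add: y_def)
  obtain K where K: "\<forall>w\<in>H. hn (Tsg t w) \<le> K * hn w" using T_bd t by blast
  define q where "q h = (1 / h) *\<^sub>R (Tsg h z - z)" for h
  have qH: "h > 0 \<Longrightarrow> q h \<in> H" for h unfolding q_def using T_in zH by (simp add: Hsp_diff Hsp_scaleR)
  have lim: "((\<lambda>h. hn ((1 / h) *\<^sub>R (Tsg h y - y) - Tsg t (G z))) \<longlongrightarrow> 0) (at_right 0)"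
  proof (rule at_right0_of_eps)
    fix e :: real assume e: "e > 0"
    obtain b where b: "b > 0" "\<forall>h. 0 < h \<and> h < b \<longrightarrow> hn (q h - G z) < e / (\<bar>K\<bar> + 1)"
      using at_right0_eps[OF G_lim[OF z], of "e / (\<bar>K\<bar> + 1)"] e unfolding q_def by auto
    show "\<exists>b>0. \<forall>h. 0 < h \<and> h < b \<longrightarrow> \<bar>hn ((1 / h) *\<^sub>R (Tsg h y - y) - Tsg t (G z))\<bar> < e"
    proof (intro exI[of _ b] conjI allI impI b(1))
      fix h assume h: "0 < h \<and> h < b"
      have "(1 / h) *\<^sub>R (Tsg h y - y) - Tsg t (G z) = Tsg t (q h - G z)"
        unfolding y_def q_def using quot_comm[OF t _ zH, of h] h t qH[of h] GzH
        by (simp add: T_diff q_def)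
      then have "hn ((1 / h) *\<^sub>R (Tsg h y - y) - Tsg t (G z)) \<le> K * hn (q h - G z)"
        using K qH[of h] h GzH Hsp_diff by metis
      also have "\<dots> \<le> \<bar>K\<bar> * hn (q h - G z)" by (simp add: hn_nonneg mult_right_mono)
      also have "\<dots> \<le> \<bar>K\<bar> * (e / (\<bar>K\<bar> + 1))" using b(2) h by (intro mult_left_mono) auto
      also have "\<dots> < e" using e by (simp add: field_simps)
      finally show "\<bar>hn ((1 / h) *\<^sub>R (Tsg h y - y) - Tsg t (G z))\<bar> < e" by (simp add: hn_nonneg)
    qed
  qed
  have TGH: "Tsg t (G z) \<in> H" using T_in t GzH by blast
  have yD: "y \<in> Dom" unfolding Dom_eq using yH TGH lim by blast
  have GyH: "G y \<in> H" using G_H yD by blast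
  define p where "p h = (1 / h) *\<^sub>R (Tsg h y - y)" for h
  have pH: "p h \<in> H" if "h > 0" for h unfolding p_def using T_in yH that by (simp add: Hsp_diff Hsp_scaleR)
  have "hn (G y - Tsg t (G z)) \<le> 0"
  proof (rule lim_le_zero)
    show "((\<lambda>h. hn (p h - G y) + hn (p h - Tsg t (G z))) \<longlongrightarrow> 0) (at_right 0)"
      using tendsto_add[OF G_lim[OF yD] lim] unfolding p_def by simp
    show "\<forall>h>0. hn (G y - Tsg t (G z)) \<le> hn (p h - G y) + hn (p h - Tsg t (G z))"
    proof (intro allI impI)
      fix h :: real assume h: "h > 0"
      have "G y - Tsg t (G z) = (G y - p h) + (p h - Tsg t (G z))" by simp
      then have "hn (G y - Tsg t (G z)) \<le> hn (G y - p h) + hn (p h - Tsg t (G z))"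
        using hn_triangle Hsp_diff GyH pH[OF h] TGH by metis
      also have "hn (G y - p h) = hn (p h - G y)" using hn_commute GyH pH[OF h] by blast
      finally show "hn (G y - Tsg t (G z)) \<le> hn (p h - G y) + hn (p h - Tsg t (G z))" .
    qed
  qed
  then have "hn (G y - Tsg t (G z)) = 0" using hn_nonneg antisym by blast
  then have "G y = Tsg t (G z)" using hn_zero_iff[OF Hsp_diff[OF GyH TGH]] by simp
  then show ?thesis using yD unfolding y_def by blast
qed

lemma T_deriv:
  assumes z: "z \<in> Dom" and t: "t \<ge> 0"
  shows "has_deriv_N hn (\<lambda>s. Tsg s z) (G (Tsg t z)) t"
  unfolding has_deriv_N_def tendsto_iff eventually_at
proof (intro allI impI)
  fix e :: real assume e: "e > 0"
  have zH: "z \<in> H" using Dom_H z by blast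
  have GzH: "G z \<in> H" using G_H z by blast
  define y where "y = Tsg t z"
  have yD: "y \<in> Dom" and Gy: "G y = Tsg t (G z)" using Dom_inv[OF z t] by (auto simp: y_def)
  have yH: "y \<in> H" using Dom_H yD by blast
  obtain b1 where b1: "b1 > 0" "\<forall>h. 0 < h \<and> h < b1 \<longrightarrow> hn ((1 / h) *\<^sub>R (Tsg h y - y) - G y) < e"
    using at_right0_eps[OF G_lim[OF yD] e] by auto
  obtain M where M: "M \<ge> 1" "\<forall>s\<in>{0..t}. \<forall>w\<in>H. hn (Tsg s w) \<le> M * hn w"
    using bound_on[of t] by blast
  have e2: "e / (2 * M) > 0" using e M by simp
  obtain b2 where b2: "b2 > 0" "\<forall>h. 0 < h \<and> h < b2 \<longrightarrow> hn ((1 / h) *\<^sub>R (Tsg h z - z) - G z) < e / (2 * M)"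
    using at_right0_eps[OF G_lim[OF z] e2] by auto
  obtain b3 where b3: "b3 > 0" "\<forall>h. 0 < h \<and> h < b3 \<longrightarrow> hn (Tsg h (G z) - G z) < e / (2 * M)"
    using at_right0_eps[OF T_cont0[OF GzH] e2] by auto
  show "\<exists>d>0. \<forall>s\<in>{0..}. s \<noteq> t \<and> dist s t < d \<longrightarrow>
          dist (hn ((1 / (s - t)) *\<^sub>R (Tsg s z - Tsg t z) - G (Tsg t z))) 0 < e"
  proof (intro exI[of _ "min b1 (min b2 b3)"] conjI ballI impI)
    show "0 < min b1 (min b2 b3)" using b1 b2 b3 by simp
    fix s :: real assume s: "s \<in> {0..}" and st: "s \<noteq> t \<and> dist s t < min b1 (min b2 b3)"
    have s0: "s \<ge> 0" using s by simp
    show "dist (hn ((1 / (s - t)) *\<^sub>R (Tsg s z - Tsg t z) - G (Tsg t z))) 0 < e"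
    proof (cases "s > t")
      case True
      define h where "h = s - t"
      have h: "0 < h" "h < b1" using True st by (auto simp: h_def dist_real_def)
      have "Tsg s z = Tsg h y" unfolding y_def h_def using T_semi[of "s - t" t z] t True zH by simp
      then have "(1 / (s - t)) *\<^sub>R (Tsg s z - Tsg t z) - G (Tsg t z) = (1 / h) *\<^sub>R (Tsg h y - y) - G y"
        by (simp add: h_def y_def)
      then show ?thesis using b1(2) h by (simp add: hn_nonneg)
    next
      case False
      then have slt: "s < t" using st by simp
      define h where "h = t - s"
      have h: "0 < h" "h < b2" "h < b3" using slt st by (auto simp: h_def dist_real_def)
      define q where "q = (1 / h) *\<^sub>R (Tsg h z - z)"
      have hzH: "Tsg h z \<in> H" using T_in h(1) zH by simp
      have qH: "q \<in> H" unfolding q_def using hzH zH by (simp add: Hsp_diff Hsp_scaleR)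
      have hGH: "Tsg h (G z) \<in> H" using T_in h(1) GzH by simp
      have tz: "Tsg t z = Tsg s (Tsg h z)" using T_semi[of s h z] s0 h(1) zH by (simp add: h_def)
      have tG: "G (Tsg t z) = Tsg s (Tsg h (G z))"
        using Gy T_semi[of s h "G z"] s0 h(1) GzH by (simp add: h_def y_def)
      have eq: "(1 / (s - t)) *\<^sub>R (Tsg s z - Tsg t z) - G (Tsg t z) = Tsg s (q - Tsg h (G z))"
      proof -
        have "Tsg s (q - Tsg h (G z)) = (1 / h) *\<^sub>R (Tsg s (Tsg h z) - Tsg s z) - Tsg s (Tsg h (G z))"
        proof -
          have "Tsg s (q - Tsg h (G z)) = Tsg s q - Tsg s (Tsg h (G z))" by (rule T_diff[OF s0 qH hGH])
          moreover have "Tsg s q = (1 / h) *\<^sub>R Tsg s (Tsg h z - z)"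
            unfolding q_def by (rule T_scaleR[OF s0 Hsp_diff[OF hzH zH]])
          moreover have "Tsg s (Tsg h z - z) = Tsg s (Tsg h z) - Tsg s z" by (rule T_diff[OF s0 hzH zH])
          ultimately show ?thesis by simp
        qed
        moreover have c: "1 / (s - t) = - (1 / h)" using slt by (simp add: h_def field_simps)
        have "(1 / (s - t)) *\<^sub>R (Tsg s z - Tsg t z) = (1 / h) *\<^sub>R (Tsg t z - Tsg s z)"
          by (simp only: c scaleR_minus_left scaleR_minus_right[symmetric] minus_diff_eq)
        ultimately show ?thesis using tz tG by simp
      qed
      have A: "hn (Tsg s (q - Tsg h (G z))) \<le> M * hn (q - Tsg h (G z))"
        using M(2) s0 slt qH hGH Hsp_diff by simp
      have "q - Tsg h (G z) = (q - G z) - (Tsg h (G z) - G z)" by simp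
      then have B: "hn (q - Tsg h (G z)) \<le> hn (q - G z) + hn (Tsg h (G z) - G z)"
        using hn_diff_le Hsp_diff qH GzH hGH by metis
      have C: "hn (q - G z) + hn (Tsg h (G z) - G z) < e / (2 * M) + e / (2 * M)"
        using b2(2) b3(2) h unfolding q_def by (intro add_strict_mono) auto
      have "M * hn (q - Tsg h (G z)) < M * (e / (2 * M) + e / (2 * M))"
        using B C M(1) by (intro mult_strict_left_mono) auto
      also have "\<dots> = e" using M(1) by (simp add: field_simps)
      finally have "hn (Tsg s (q - Tsg h (G z))) < e" using A by linarith
      then show ?thesis using eq by (simp add: hn_nonneg)
    qed
  qed
qed

end




context opsetup begin

lemma S_lin: "clinear_on UNIV S" using S_bdd unfolding bounded_clinear_op_def by blast
lemma Dp_lin: "clinear_on UNIV Dp" using Dp_bdd unfolding bounded_clinear_op_def by blast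

lemma S_scaleC: "S (c *\<^sub>C x) = c *\<^sub>C S x" using S_lin unfolding clinear_on_def by blast
lemma S_add: "S (x + y) = S x + S y" using S_lin unfolding clinear_on_def by blast
lemma Dp_scaleC: "Dp (c *\<^sub>C x) = c *\<^sub>C Dp x" using Dp_lin unfolding clinear_on_def by blast
lemma Dp_add: "Dp (x + y) = Dp x + Dp y" using Dp_lin unfolding clinear_on_def by blast
lemma Dp_scaleR: "Dp (r *\<^sub>R x) = r *\<^sub>R Dp x" by (simp add: scaleR_scaleC Dp_scaleC)
lemma S_scaleR: "S (r *\<^sub>R x) = r *\<^sub>R S x" by (simp add: scaleR_scaleC S_scaleC)
lemma Dp_zero: "Dp 0 = 0" using Dp_scaleC[of 0 0] by simp
lemma S_zero: "S 0 = 0" using S_scaleC[of 0 0] by simp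
lemma Dp_uminus: "Dp (- x) = - Dp x" by (subst (1 2) uminus_scaleC) (rule Dp_scaleC)
lemma Dp_diff: "Dp (x - y) = Dp x - Dp y" by (simp only: diff_conv_add_uminus Dp_add Dp_uminus)

lemma KD_ex: "\<exists>K\<ge>0. \<forall>x. norm (Dp x) \<le> K * norm x"
proof -
  obtain K where K: "\<forall>x. norm (Dp x) \<le> K * norm x" using Dp_bdd unfolding bounded_clinear_op_def by blast
  have "\<forall>x. norm (Dp x) \<le> max K 0 * norm x"
    using K by (metis max.cobounded1 mult_right_mono norm_ge_zero order_trans)
  then show ?thesis by (intro exI[of _ "max K 0"]) auto
qed

lemma KS_ex: "\<exists>K\<ge>0. \<forall>x. norm (S x) \<le> K * norm x"
proof -
  obtain K where K: "\<forall>x. norm (S x) \<le> K * norm x" using S_bdd unfolding bounded_clinear_op_def by blast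
  have "\<forall>x. norm (S x) \<le> max K 0 * norm x"
    using K by (metis max.cobounded1 mult_right_mono norm_ge_zero order_trans)
  then show ?thesis by (intro exI[of _ "max K 0"]) auto
qed

definition KD where "KD = (SOME K. K \<ge> 0 \<and> (\<forall>x. norm (Dp x) \<le> K * norm x))"
definition KS where "KS = (SOME K. K \<ge> 0 \<and> (\<forall>x. norm (S x) \<le> K * norm x))"

lemma KD: "KD \<ge> 0" "norm (Dp x) \<le> KD * norm x"
  using someI_ex[OF KD_ex] unfolding KD_def by auto
lemma KS: "KS \<ge> 0" "norm (S x) \<le> KS * norm x"
  using someI_ex[OF KS_ex] unfolding KS_def by auto

lemma Dps_bd: "norm (Dps y) \<le> KD * norm y"
proof -
  have "(norm (Dps y))\<^sup>2 = Re (ip (Dp (Dps y)) y)"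
    using Dps_adj by (simp add: Re_ip_self[symmetric])
  also have "\<dots> \<le> norm (Dp (Dps y)) * norm y" by (rule Re_ip_le)
  also have "\<dots> \<le> KD * norm (Dps y) * norm y" using KD by (simp add: mult_right_mono)
  finally have "norm (Dps y) * norm (Dps y) \<le> (KD * norm y) * norm (Dps y)"
    by (simp add: power2_eq_square algebra_simps)
  then show ?thesis
    by (cases "norm (Dps y) = 0") (use KD in auto)
qed

lemma Re_Dp_bd: "\<bar>Re (ip (Dp a) b)\<bar> \<le> KD * norm a * norm b"
proof -
  have "\<bar>Re (ip (Dp a) b)\<bar> \<le> norm (Dp a) * norm b" by (rule abs_Re_ip_le)
  also have "\<dots> \<le> KD * norm a * norm b" using KD by (simp add: mult_right_mono)
  finally show ?thesis .
qed

lemma Re_Dps: "Re (ip (Dps a) b) = Re (ip (Dp b) a)"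
proof -
  have "Re (ip (Dps a) b) = Re (ip b (Dps a))" by (rule Re_ip_sym)
  also have "\<dots> = Re (ip (Dp b) a)" using Dps_adj by simp
  finally show ?thesis .
qed

lemma D1_eq: "Re (ip ((1/2) *\<^sub>C (Dp a + Dps a)) a) = Re (ip (Dp a) a)"
  by (simp add: ip_scaleC_left ip_add_left Re_Dps)

lemma S_real: "Im (ip (S b) b) = 0"
proof -
  have "ip (S b) b = cnj (ip (S b) b)"
    using S_sa ip_sym[of "S b" b] by metis
  then show ?thesis by (metis Im_complex_of_real Reals_cnj_iff complex_is_Real_iff)
qed

lemma Re_iS: "Re (ip (\<i> *\<^sub>C S b) b) = 0"
  using S_real by (simp add: ip_scaleC_left)

end




locale lyap = sgsetup +
  fixes k p q :: real
  assumes delta_pos: "delta_C ip VR R Dp > 0"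
    and beta_pos: "beta_C ip VR R Dp > 0"
    and k_pos: "0 < k" and k_lt: "k < beta_C ip VR R Dp"
    and p_pos: "p > 0" and q_pos: "q > 0" and pq: "p + q \<le> 1"
    and omega1: "omega1' ip VR R S Dp Dps a0 k p q \<ge> 1"
begin

abbreviation "\<delta> \<equiv> delta_C ip VR R Dp"
abbreviation "\<beta> \<equiv> beta_C ip VR R Dp"
abbreviation "nS \<equiv> normS_tilde VR R S"
abbreviation "nD \<equiv> normD2 VR R Dp Dps"
abbreviation "\<omega>1 \<equiv> omega1' ip VR R S Dp Dps a0 k p q"
abbreviation "\<omega>2 \<equiv> omega2 ip VR R Dp Dps k"
abbreviation "\<theta> \<equiv> theta' ip VR R S Dp Dps a0 k p q"

lemma div_sq_bd:
  fixes v n :: real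
  assumes "\<bar>v\<bar> \<le> K * n" "n \<ge> 0" "K \<ge> 0"
  shows "\<bar>v / n\<bar> \<le> K"
proof (cases "n = 0")
  case True then show ?thesis using assms by simp
next
  case False
  then have n: "n > 0" using assms by simp
  have "\<bar>v\<bar> / n \<le> K" using assms(1) n by (simp add: pos_divide_le_eq)
  moreover have "\<bar>v / n\<bar> = \<bar>v\<bar> / n" using n by (simp add: abs_divide)
  ultimately show ?thesis by (simp only:)
qed

lemma delta_bd: assumes x: "x \<in> VR" shows "\<delta> * (norm (R x))\<^sup>2 \<le> Re (ip (Dp (R x)) (R x))"
proof (cases "x = 0")
  case True then show ?thesis by (simp add: R_zero Dp_zero)
next
  case False
  let ?f = "\<lambda>x. Re (ip (Dp (R x)) (R x)) / (norm (R x))\<^sup>2"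
  have bdd: "bdd_below (?f ` (VR - {0}))"
  proof (rule bdd_belowI[of _ "- KD"])
    fix v assume "v \<in> ?f ` (VR - {0})"
    then obtain y where v: "v = ?f y" by blast
    have "\<bar>Re (ip (Dp (R y)) (R y))\<bar> \<le> KD * (norm (R y))\<^sup>2"
      using Re_Dp_bd[of "R y" "R y"] by (simp add: power2_eq_square mult.assoc)
    then have "\<bar>v\<bar> \<le> KD" unfolding v using KD(1) by (intro div_sq_bd) auto
    then show "- KD \<le> v" by linarith
  qed
  have "\<delta> \<le> ?f x" unfolding delta_C_def using False x by (intro cINF_lower[OF bdd]) auto
  moreover have "norm (R x) > 0" using False x R_inj by auto
  ultimately show ?thesis by (simp add: field_simps)
qed

lemma Re_Dp_nonneg: "x \<in> VR \<Longrightarrow> 0 \<le> Re (ip (Dp (R x)) (R x))"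
  using delta_bd[of x] delta_pos by (smt (verit) zero_le_mult_iff zero_le_power2)

lemma beta_bd: assumes x: "x \<in> VR" shows "\<beta> * (norm x)\<^sup>2 \<le> Re (ip (Dp (R x)) (R x))"
proof (cases "x = 0")
  case True then show ?thesis by (simp add: R_zero Dp_zero)
next
  case False
  let ?f = "\<lambda>x. Re (ip (Dp (R x)) (R x)) / (norm x)\<^sup>2"
  have bdd: "bdd_below (?f ` (VR - {0}))"
    by (rule bdd_belowI[of _ 0]) (auto intro!: divide_nonneg_nonneg Re_Dp_nonneg)
  have "\<beta> \<le> ?f x" unfolding beta_C_def using False x by (intro cINF_lower[OF bdd]) auto
  then show ?thesis using False by (simp add: field_simps)
qed

lemma nS_bd: assumes x: "x \<in> VR" shows "norm (S (R x)) \<le> nS * norm (R x)"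
proof (cases "x = 0")
  case True then show ?thesis by (simp add: R_zero S_zero)
next
  case False
  let ?f = "\<lambda>x. norm (S (R x)) / norm (R x)"
  have bdd: "bdd_above (?f ` (VR - {0}))"
  proof (rule bdd_aboveI[of _ KS])
    fix v assume "v \<in> ?f ` (VR - {0})"
    then obtain y where v: "v = ?f y" by blast
    have "\<bar>norm (S (R y))\<bar> \<le> KS * norm (R y)" using KS by simp
    then have "\<bar>v\<bar> \<le> KS" unfolding v using KS(1) by (intro div_sq_bd) auto
    then show "v \<le> KS" by linarith
  qed
  have "?f x \<le> nS" unfolding normS_tilde_def using False x by (intro cSUP_upper[OF _ bdd]) auto
  moreover have "norm (R x) > 0" using False x R_inj by auto
  ultimately show ?thesis by (simp add: field_simps)
qed

lemma nD_bd: assumes x: "x \<in> VR"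
  shows "norm ((1 / (2 * \<i>)) *\<^sub>C (Dp (R x) - Dps (R x))) \<le> nD * norm (R x)"
proof (cases "x = 0")
  case True
  have "Dps 0 = 0" using Dps_bd[of 0] by simp
  then show ?thesis using True by (simp add: R_zero Dp_zero)
next
  case False
  let ?f = "\<lambda>x. norm ((1 / (2 * \<i>)) *\<^sub>C (Dp (R x) - Dps (R x))) / norm (R x)"
  have bdd: "bdd_above (?f ` (VR - {0}))"
  proof (rule bdd_aboveI[of _ KD])
    fix v assume "v \<in> ?f ` (VR - {0})"
    then obtain y where v: "v = ?f y" by blast
    have "norm ((1 / (2 * \<i>)) *\<^sub>C (Dp (R y) - Dps (R y))) = (1/2) * norm (Dp (R y) - Dps (R y))"
      by (simp add: norm_scaleC norm_divide norm_mult)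
    also have "\<dots> \<le> (1/2) * (norm (Dp (R y)) + norm (Dps (R y)))"
      by (simp add: norm_triangle_ineq4)
    also have "\<dots> \<le> (1/2) * (KD * norm (R y) + KD * norm (R y))"
      using KD(2)[of "R y"] Dps_bd[of "R y"] by simp
    finally have "\<bar>norm ((1 / (2 * \<i>)) *\<^sub>C (Dp (R y) - Dps (R y)))\<bar> \<le> KD * norm (R y)" by simp
    then have "\<bar>v\<bar> \<le> KD" unfolding v using KD(1) by (intro div_sq_bd) auto
    then show "v \<le> KD" by linarith
  qed
  have "?f x \<le> nD" unfolding normD2_def using False x by (intro cSUP_upper[OF _ bdd]) auto
  moreover have "norm (R x) > 0" using False x R_inj by auto
  ultimately show ?thesis by (simp add: field_simps)
qed

lemma norm_sq_le_R: "x \<in> VR \<Longrightarrow> (norm x)\<^sup>2 \<le> (norm (R x))\<^sup>2 / a0"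
  using F1[of x] a0_pos by (simp add: field_simps)

lemma omega2_bd: assumes x: "x \<in> VR"
  shows "(norm (R x))\<^sup>2 + k * Re (ip (Dp (R x)) (R x)) + k\<^sup>2 * (norm x)\<^sup>2 \<le> \<omega>2 * (norm (R x))\<^sup>2"
proof (cases "x = 0")
  case True then show ?thesis by (simp add: R_zero Dp_zero)
next
  case False
  let ?f = "\<lambda>x. ((norm (R x))\<^sup>2 + k * Re (ip ((1/2) *\<^sub>C (Dp (R x) + Dps (R x))) (R x))
                + k\<^sup>2 * (norm x)\<^sup>2) / (norm (R x))\<^sup>2"
  have bdd: "bdd_above (?f ` (VR - {0}))"
  proof (rule bdd_aboveI[of _ "1 + k * KD + k\<^sup>2 / a0"])
    fix v assume "v \<in> ?f ` (VR - {0})"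
    then obtain y where v: "v = ?f y" and y: "y \<in> VR" by blast
    have a: "k * Re (ip (Dp (R y)) (R y)) \<le> k * KD * (norm (R y))\<^sup>2"
      using Re_Dp_bd[of "R y" "R y"] k_pos by (simp add: power2_eq_square mult_left_mono abs_le_iff)
    have b: "k\<^sup>2 * (norm y)\<^sup>2 \<le> k\<^sup>2 / a0 * (norm (R y))\<^sup>2"
      using mult_left_mono[OF norm_sq_le_R[OF y], of "k\<^sup>2"] by simp
    have "\<bar>(norm (R y))\<^sup>2 + k * Re (ip ((1/2) *\<^sub>C (Dp (R y) + Dps (R y))) (R y)) + k\<^sup>2 * (norm y)\<^sup>2\<bar>
          \<le> (1 + k * KD + k\<^sup>2 / a0) * (norm (R y))\<^sup>2"
    proof -
      have nn: "0 \<le> (norm (R y))\<^sup>2 + k * Re (ip (Dp (R y)) (R y)) + k\<^sup>2 * (norm y)\<^sup>2"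
        using Re_Dp_nonneg[OF y] k_pos by simp
      have le: "(norm (R y))\<^sup>2 + k * Re (ip (Dp (R y)) (R y)) + k\<^sup>2 * (norm y)\<^sup>2
          \<le> (norm (R y))\<^sup>2 + k * KD * (norm (R y))\<^sup>2 + k\<^sup>2 / a0 * (norm (R y))\<^sup>2"
        using a b by linarith
      have eq: "(norm (R y))\<^sup>2 + k * KD * (norm (R y))\<^sup>2 + k\<^sup>2 / a0 * (norm (R y))\<^sup>2
          = (1 + k * KD + k\<^sup>2 / a0) * (norm (R y))\<^sup>2" by (simp add: algebra_simps)
      show ?thesis unfolding D1_eq using nn le eq by simp
    qed
    then have "\<bar>v\<bar> \<le> 1 + k * KD + k\<^sup>2 / a0" unfolding v
      using KD(1) k_pos a0_pos by (intro div_sq_bd) auto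
    then show "v \<le> 1 + k * KD + k\<^sup>2 / a0" by linarith
  qed
  have "?f x \<le> \<omega>2" unfolding omega2_def using False x by (intro cSUP_upper[OF _ bdd]) auto
  moreover have "norm (R x) > 0" using False x R_inj by auto
  ultimately show ?thesis unfolding D1_eq by (simp add: field_simps)
qed

lemma omega2_ge1: assumes x: "x \<in> VR" "x \<noteq> 0" shows "\<omega>2 \<ge> 1"
proof -
  have "(norm (R x))\<^sup>2 \<le> (norm (R x))\<^sup>2 + k * Re (ip (Dp (R x)) (R x)) + k\<^sup>2 * (norm x)\<^sup>2"
    using Re_Dp_nonneg[OF x(1)] k_pos by simp
  also have "\<dots> \<le> \<omega>2 * (norm (R x))\<^sup>2" by (rule omega2_bd[OF x(1)])
  finally have "1 * (norm (R x))\<^sup>2 \<le> \<omega>2 * (norm (R x))\<^sup>2" by simp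
  moreover have "(norm (R x))\<^sup>2 > 0" using x R_inj by auto
  ultimately show ?thesis by (simp add: mult_le_cancel_right)
qed

end




context lyap begin

definition Q :: "'a \<times> 'a \<Rightarrow> 'a \<times> 'a \<Rightarrow> real" where
  "Q x y = Re (ip (fst x) (fst y)) + k * Re (ip (fst x) (snd y)) + k * Re (ip (fst y) (snd x))
     + Re (ip (R (snd x)) (R (snd y)))
     + k / 2 * (Re (ip (Dp (R (snd x))) (R (snd y))) + Re (ip (Dp (R (snd y))) (R (snd x))))"

definition V :: "'a \<times> 'a \<Rightarrow> real" where "V x = Q x x"

lemma V_eq: "V x = (norm (fst x))\<^sup>2 + 2 * k * Re (ip (fst x) (snd x)) + (norm (R (snd x)))\<^sup>2
    + k * Re (ip (Dp (R (snd x))) (R (snd x)))"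
  unfolding V_def Q_def by (simp add: Re_ip_self)

lemma Q_G_eq:
  assumes x: "x \<in> Dom"
  defines "a \<equiv> R (fst x)" and "b \<equiv> R (snd x)"
  shows "2 * Q x (G x) = - 2 * Re (ip (Dp a) a) - 2 * Re (ip a (\<i> *\<^sub>C S b)) + 2 * k * (norm (fst x))\<^sup>2
           - 2 * k * (norm b)\<^sup>2 - k * Re (ip (Dp a - Dps a) b)"
proof -
  obtain x1 x2 where xx: "x = (x1, x2)" by (cases x)
  have x1: "x1 \<in> VR" and x2: "x2 \<in> VR" and w: "Dp (R x1) + (R x2 + \<i> *\<^sub>C S (R x2)) \<in> VR"
    using x unfolding xx dom_calA_def by auto
  define w where "w = Dp (R x1) + (R x2 + \<i> *\<^sub>C S (R x2))"
  have a: "a = R x1" and b: "b = R x2" unfolding a_def b_def xx by simp_all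
  have Gx: "G (x1, x2) = (- R w, x1)" unfolding w_def calA_def by simp
  have e1: "Re (ip x1 (- R w)) = - Re (ip a w)"
    using R_sym[OF x1 w] unfolding a w_def by (simp add: ip_minus_right)
  have e2: "Re (ip (- R w) x2) = - Re (ip w b)"
    using R_sym[OF w x2] unfolding b w_def by (simp add: ip_minus_left)
  have e3: "Re (ip a w) = Re (ip (Dp a) a) + Re (ip a b) + Re (ip a (\<i> *\<^sub>C S b))"
    unfolding w_def a[symmetric] b[symmetric] by (simp add: ip_add_right Re_ip_sym[of a "Dp a"])
  have e4: "Re (ip w b) = Re (ip (Dp a) b) + (norm b)\<^sup>2"
    unfolding w_def a[symmetric] b[symmetric] using Re_iS[of b] by (simp add: ip_add_left Re_ip_self)
  have e5: "Re (ip (Dp b) a) = Re (ip (Dps a) b)" by (simp add: Re_Dps)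
  have e6: "Re (ip (Dp a - Dps a) b) = Re (ip (Dp a) b) - Re (ip (Dps a) b)" by (simp add: ip_diff_left)
  have e7: "Re (ip x1 x1) = (norm x1)\<^sup>2" by (rule Re_ip_self)
  have e8: "Re (ip b a) = Re (ip a b)" by (rule Re_ip_sym)
  have "Q x (G x) = Re (ip x1 (- R w)) + k * Re (ip x1 x1) + k * Re (ip (- R w) x2) + Re (ip b a)
        + k / 2 * (Re (ip (Dp b) a) + Re (ip (Dp a) b))"
    unfolding Q_def Gx xx a b by simp
  then have "Q x (G x) = - (Re (ip (Dp a) a) + Re (ip a b) + Re (ip a (\<i> *\<^sub>C S b))) + k * (norm x1)\<^sup>2
      + k * - (Re (ip (Dp a) b) + (norm b)\<^sup>2) + Re (ip a b) + k / 2 * (Re (ip (Dps a) b) + Re (ip (Dp a) b))"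
    by (simp only: e1 e2 e3 e4 e5 e7 e8)
  then show ?thesis unfolding e6 xx by (simp add: algebra_simps)
qed

lemma young: fixes u v c :: real assumes "c > 0" shows "2 * u * v \<le> c * v\<^sup>2 + u\<^sup>2 / c"
proof -
  have "0 \<le> (c * v - u)\<^sup>2 / c" using assms by simp
  also have "(c * v - u)\<^sup>2 / c = c * v\<^sup>2 - 2 * u * v + u\<^sup>2 / c"
    using assms by (simp add: power2_eq_square field_simps)
  finally show ?thesis by simp
qed

lemma V_upper: assumes x: "x \<in> H"
  shows "V x \<le> 2 * (norm (fst x))\<^sup>2 + \<omega>2 * (norm (R (snd x)))\<^sup>2"
proof -
  have x2: "snd x \<in> VR" using x Hsp_iff by blast
  have "2 * k * Re (ip (fst x) (snd x)) \<le> 2 * k * (norm (fst x) * norm (snd x))"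
    using Re_ip_le k_pos by simp
  also have "\<dots> = 2 * (norm (fst x)) * (k * norm (snd x))" by simp
  also have "\<dots> \<le> 1 * (k * norm (snd x))\<^sup>2 + (norm (fst x))\<^sup>2 / 1" by (rule young) simp
  finally have a: "2 * k * Re (ip (fst x) (snd x)) \<le> (norm (fst x))\<^sup>2 + k\<^sup>2 * (norm (snd x))\<^sup>2"
    by (simp add: power_mult_distrib)
  show ?thesis unfolding V_eq using a omega2_bd[OF x2] by linarith
qed

lemma lyap_ineq:
  assumes x: "x \<in> Dom" and nontriv: "\<exists>v\<in>VR. v \<noteq> 0"
  shows "2 * Q x (G x) \<le> - 2 * k * \<theta> * V x"
proof -
  define a where "a = R (fst x)"
  define b where "b = R (snd x)"
  have x1: "fst x \<in> VR" and x2: "snd x \<in> VR" using x unfolding dom_calA_def by auto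
  have xH: "x \<in> H" using Dom_H x by blast
  define \<alpha> where "\<alpha> = norm a"
  define \<beta>' where "\<beta>' = norm b"
  define n1 where "n1 = norm (fst x)"
  have w2: "\<omega>2 \<ge> 1" using nontriv omega2_ge1 by blast
  have i: "\<delta> * \<alpha>\<^sup>2 \<le> Re (ip (Dp a) a)" using delta_bd[OF x1] by (simp add: a_def \<alpha>_def)
  have ii: "- Re (ip a (\<i> *\<^sub>C S b)) \<le> nS * \<alpha> * \<beta>'"
  proof -
    have "- Re (ip a (\<i> *\<^sub>C S b)) \<le> norm a * norm (\<i> *\<^sub>C S b)"
      using abs_Re_ip_le[of a "\<i> *\<^sub>C S b"] by linarith
    also have "norm (\<i> *\<^sub>C S b) = norm (S b)" by (simp add: norm_scaleC)
    also have "norm a * norm (S b) \<le> norm a * (nS * norm b)"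
      using nS_bd[OF x2] by (simp add: b_def mult_left_mono)
    finally show ?thesis by (simp add: \<alpha>_def \<beta>'_def mult.commute mult.left_commute)
  qed
  have iii: "- Re (ip (Dp a - Dps a) b) \<le> 2 * nD * \<alpha> * \<beta>'"
  proof -
    define w where "w = (1 / (2 * \<i>)) *\<^sub>C (Dp a - Dps a)"
    have "(2 * \<i>) *\<^sub>C w = Dp a - Dps a" unfolding w_def by (simp add: scaleC_scaleC scaleC_one)
    then have "- Re (ip (Dp a - Dps a) b) \<le> norm ((2 * \<i>) *\<^sub>C w) * norm b"
      using abs_Re_ip_le[of "(2 * \<i>) *\<^sub>C w" b] by (metis abs_le_iff)
    also have "norm ((2 * \<i>) *\<^sub>C w) = 2 * norm w" by (simp add: norm_scaleC norm_mult)
    also have "2 * norm w * norm b \<le> 2 * (nD * norm a) * norm b"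
      using nD_bd[OF x1] unfolding w_def a_def by (simp add: mult_right_mono)
    finally show ?thesis by (simp add: \<alpha>_def \<beta>'_def)
  qed
  have eq: "2 * Q x (G x) = - 2 * Re (ip (Dp a) a) - 2 * Re (ip a (\<i> *\<^sub>C S b)) + 2 * k * n1\<^sup>2
           - 2 * k * \<beta>'\<^sup>2 - k * Re (ip (Dp a - Dps a) b)"
    using Q_G_eq[OF x] unfolding a_def b_def n1_def \<beta>'_def by simp
  have iii': "- k * Re (ip (Dp a - Dps a) b) \<le> k * (2 * nD * \<alpha> * \<beta>')"
    using mult_left_mono[OF iii, of k] k_pos by simp
  have s1: "2 * Q x (G x) \<le> - 2 * \<delta> * \<alpha>\<^sup>2 + 2 * (nS * \<alpha>) * \<beta>' + 2 * k * n1\<^sup>2 - 2 * k * \<beta>'\<^sup>2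
             + k * (2 * (nD * \<alpha>) * \<beta>')"
    using eq i ii iii' by (simp add: algebra_simps)
  have pk: "2 * p * k > 0" using p_pos k_pos by simp
  have y1: "2 * (nS * \<alpha>) * \<beta>' \<le> (2 * p * k) * \<beta>'\<^sup>2 + (nS * \<alpha>)\<^sup>2 / (2 * p * k)"
    by (rule young[OF pk])
  have y2: "k * (2 * (nD * \<alpha>) * \<beta>') \<le> k * ((2 * q) * \<beta>'\<^sup>2 + (nD * \<alpha>)\<^sup>2 / (2 * q))"
    using young[of "2 * q" "nD * \<alpha>" \<beta>'] q_pos k_pos by (intro mult_left_mono) auto
  define A where "A = 2 * \<delta> - nS\<^sup>2 / (2 * p * k) - k * nD\<^sup>2 / (2 * q)"
  have s2: "2 * Q x (G x) \<le> - A * \<alpha>\<^sup>2 + 2 * k * n1\<^sup>2 - 2 * k * (1 - p - q) * \<beta>'\<^sup>2"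
  proof -
    have "- A * \<alpha>\<^sup>2 + 2 * k * n1\<^sup>2 - 2 * k * (1 - p - q) * \<beta>'\<^sup>2
        = - 2 * \<delta> * \<alpha>\<^sup>2 + ((2 * p * k) * \<beta>'\<^sup>2 + (nS * \<alpha>)\<^sup>2 / (2 * p * k)) + 2 * k * n1\<^sup>2 - 2 * k * \<beta>'\<^sup>2
             + k * ((2 * q) * \<beta>'\<^sup>2 + (nD * \<alpha>)\<^sup>2 / (2 * q))"
      unfolding A_def using p_pos q_pos k_pos by (simp add: field_simps power_mult_distrib)
    then show ?thesis using s1 y1 y2 by linarith
  qed
  have Aeq: "A = 2 * k * \<omega>1 / a0"
    unfolding A_def omega1'_def using a0_pos k_pos p_pos q_pos by (simp add: field_simps power2_eq_square)
  have A0: "A \<ge> 0" using Aeq omega1 a0_pos k_pos by simp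
  have F: "a0 * n1\<^sup>2 \<le> \<alpha>\<^sup>2" using F1[OF x1] by (simp add: n1_def \<alpha>_def a_def)
  have "- A * \<alpha>\<^sup>2 \<le> - A * (a0 * n1\<^sup>2)" using mult_left_mono[OF F A0] by simp
  also have "- A * (a0 * n1\<^sup>2) = - 2 * k * \<omega>1 * n1\<^sup>2" using Aeq a0_pos by simp
  finally have s3: "2 * Q x (G x) \<le> - 2 * k * (\<omega>1 - 1) * n1\<^sup>2 - 2 * k * (1 - p - q) * \<beta>'\<^sup>2"
    using s2 by (simp add: algebra_simps)
  have th1: "\<theta> \<le> (\<omega>1 - 1) / 2" unfolding theta'_def by (rule min.cobounded1)
  have th2: "\<theta> \<le> (1 - p - q) / \<omega>2" unfolding theta'_def by (rule min.cobounded2)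
  have th0: "\<theta> \<ge> 0" unfolding theta'_def using omega1 pq w2 by simp
  have t1: "- 2 * k * (\<omega>1 - 1) * n1\<^sup>2 \<le> - 2 * k * \<theta> * (2 * n1\<^sup>2)"
  proof -
    have "2 * \<theta> \<le> \<omega>1 - 1" using mult_left_mono[OF th1, of 2] by simp
    then have "(2 * k * n1\<^sup>2) * (2 * \<theta>) \<le> (2 * k * n1\<^sup>2) * (\<omega>1 - 1)"
      using k_pos by (intro mult_left_mono) auto
    then show ?thesis by (simp add: algebra_simps)
  qed
  have t2: "- 2 * k * (1 - p - q) * \<beta>'\<^sup>2 \<le> - 2 * k * \<theta> * (\<omega>2 * \<beta>'\<^sup>2)"
  proof -
    have "\<theta> * \<omega>2 \<le> 1 - p - q" using th2 w2 by (simp add: pos_le_divide_eq)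
    then have "(2 * k * \<beta>'\<^sup>2) * (\<theta> * \<omega>2) \<le> (2 * k * \<beta>'\<^sup>2) * (1 - p - q)"
      using k_pos by (intro mult_left_mono) auto
    then show ?thesis by (simp add: algebra_simps)
  qed
  have Vu: "V x \<le> 2 * n1\<^sup>2 + \<omega>2 * \<beta>'\<^sup>2" using V_upper[OF xH] by (simp add: n1_def \<beta>'_def b_def)
  have t3: "- 2 * k * \<theta> * (2 * n1\<^sup>2 + \<omega>2 * \<beta>'\<^sup>2) \<le> - 2 * k * \<theta> * V x"
  proof -
    have "(2 * k * \<theta>) * V x \<le> (2 * k * \<theta>) * (2 * n1\<^sup>2 + \<omega>2 * \<beta>'\<^sup>2)"
      using Vu k_pos th0 by (intro mult_left_mono) auto
    then show ?thesis by simp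
  qed
  show ?thesis using s3 t1 t2 t3 by (simp add: algebra_simps)
qed

end




lemma decay_cmp:
  fixes g g' :: "real \<Rightarrow> real" and c t :: real
  assumes der: "\<And>s. s \<ge> 0 \<Longrightarrow> (g has_real_derivative g' s) (at s within {0..})"
    and ineq: "\<And>s. s \<ge> 0 \<Longrightarrow> g' s \<le> - c * g s" and t: "t \<ge> 0"
  shows "g t \<le> exp (- c * t) * g 0"
proof -
  define h where "h s = exp (c * s) * g s" for s
  define h' where "h' s = exp (c * s) * (c * g s + g' s)" for s
  have hder: "(h has_real_derivative h' s) (at s within {0..})" if s: "s \<ge> 0" for s
  proof -
    have "((\<lambda>s. exp (c * s)) has_real_derivative exp (c * s) * c) (at s within {0..})"
      by (auto intro!: derivative_eq_intros)
    from DERIV_mult[OF this der[OF s]] show ?thesis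
      unfolding h_def h'_def by (simp add: algebra_simps)
  qed
  have h'le: "h' s \<le> 0" if "s \<ge> 0" for s
    using ineq[OF that] unfolding h'_def by (simp add: mult_nonneg_nonpos)
  have "h t \<le> h 0"
  proof (cases "t = 0")
    case True then show ?thesis by simp
  next
    case False
    then have t0: "0 < t" using t by simp
    have cont: "continuous_on {0..t} h"
      unfolding continuous_on_eq_continuous_within
    proof
      fix s assume s: "s \<in> {0..t}"
      have "continuous (at s within {0..}) h" using DERIV_continuous[OF hder] s by simp
      then show "continuous (at s within {0..t}) h"
        by (rule continuous_within_subset) auto
    qed
    have "h differentiable (at s)" if "0 < s" "s < t" for s
    proof -
      have "at s within {0..} = at s" using that by (intro at_within_interior) simp
      then have "(h has_real_derivative h' s) (at s)" using hder[of s] that by simp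
      then show ?thesis using real_differentiable_def by blast
    qed
    then obtain l z where lz: "0 < z" "z < t" "DERIV h z :> l" "h t - h 0 = (t - 0) * l"
      using MVT[OF t0 cont] by blast
    have "at z within {0..} = at z" using lz by (intro at_within_interior) simp
    then have "DERIV h z :> h' z" using hder[of z] lz by simp
    then have "l = h' z" using lz(3) DERIV_unique by blast
    then have "l \<le> 0" using h'le lz by simp
    then have "t * l \<le> 0" using t0 by (simp add: mult_nonneg_nonpos)
    then show ?thesis using lz(4) by simp
  qed
  then have "exp (c * t) * g t \<le> g 0" unfolding h_def by simp
  then have "exp (- c * t) * (exp (c * t) * g t) \<le> exp (- c * t) * g 0"
    by (intro mult_left_mono) auto
  then show ?thesis by (simp add: exp_minus field_simps)
qed




lemma abs_comb:
  fixes a1 a2 a3 a4 a5 a6 k :: real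
  assumes k: "k \<ge> 0"
  shows "\<bar>a1 + k * a2 + k * a3 + a4 + k / 2 * (a5 + a6)\<bar>
    \<le> \<bar>a1\<bar> + k * \<bar>a2\<bar> + k * \<bar>a3\<bar> + \<bar>a4\<bar> + k / 2 * (\<bar>a5\<bar> + \<bar>a6\<bar>)"
proof -
  have "\<bar>k * a2\<bar> = k * \<bar>a2\<bar>" "\<bar>k * a3\<bar> = k * \<bar>a3\<bar>"
    "\<bar>k / 2 * (a5 + a6)\<bar> = k / 2 * \<bar>a5 + a6\<bar>" using k by (simp_all add: abs_mult)
  moreover have "k / 2 * \<bar>a5 + a6\<bar> \<le> k / 2 * (\<bar>a5\<bar> + \<bar>a6\<bar>)"
    using k by (intro mult_left_mono abs_triangle_ineq) auto
  moreover have "\<bar>a1 + k * a2 + k * a3 + a4 + k / 2 * (a5 + a6)\<bar>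
     \<le> \<bar>a1\<bar> + \<bar>k * a2\<bar> + \<bar>k * a3\<bar> + \<bar>a4\<bar> + \<bar>k / 2 * (a5 + a6)\<bar>"
  proof -
    have abs5: "\<bar>x1 + x2 + x3 + x4 + x5\<bar> \<le> \<bar>x1\<bar> + \<bar>x2\<bar> + \<bar>x3\<bar> + \<bar>x4\<bar> + \<bar>x5\<bar>" for x1 x2 x3 x4 x5 :: real
      unfolding abs_le_iff
      using abs_ge_self[of x1] abs_ge_minus_self[of x1] abs_ge_self[of x2] abs_ge_minus_self[of x2]
        abs_ge_self[of x3] abs_ge_minus_self[of x3] abs_ge_self[of x4] abs_ge_minus_self[of x4]
        abs_ge_self[of x5] abs_ge_minus_self[of x5] by linarith
    show ?thesis by (rule abs5)
  qed
  ultimately show ?thesis by linarith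
qed

context lyap begin

lemma Q_add_right: "y \<in> H \<Longrightarrow> w \<in> H \<Longrightarrow> Q x (y + w) = Q x y + Q x w"
  unfolding Q_def Hsp_iff
  by (simp add: R_add Dp_add ip_add_left ip_add_right algebra_simps)

lemma Q_scale_right: "y \<in> H \<Longrightarrow> Q x (r *\<^sub>R y) = r * Q x y"
  unfolding Q_def Hsp_iff
  by (simp add: R_scaleR Dp_scaleR ip_scaleR_left ip_scaleR_right algebra_simps)

lemma Q_sym: "Q x y = Q y x"
  unfolding Q_def by (simp add: Re_ip_sym[of "fst x"] Re_ip_sym[of "R (snd x)"] algebra_simps)

lemma Q_diff_right: "y \<in> H \<Longrightarrow> w \<in> H \<Longrightarrow> Q x (y - w) = Q x y - Q x w"
proof -
  assume a: "y \<in> H" "w \<in> H"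
  have "Q x (y - w) = Q x (y + (-1) *\<^sub>R w)" by simp
  also have "\<dots> = Q x y + (-1) * Q x w" using a by (simp only: Q_add_right Hsp_scaleR Q_scale_right)
  finally show ?thesis by simp
qed

lemma V_add: "x \<in> H \<Longrightarrow> h \<in> H \<Longrightarrow> V (x + h) = V x + 2 * Q x h + V h"
proof -
  assume a: "x \<in> H" "h \<in> H"
  have "V (x + h) = Q (x + h) x + Q (x + h) h" unfolding V_def using a by (simp add: Q_add_right)
  also have "Q (x + h) x = Q x x + Q x h" using a by (simp add: Q_sym[of "x + h"] Q_add_right)
  also have "Q (x + h) h = Q h x + Q h h" using a by (simp add: Q_sym[of "x + h"] Q_add_right)
  also have "Q h x = Q x h" by (rule Q_sym)
  finally show ?thesis unfolding V_def by simp
qed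

lemma V_scale: "h \<in> H \<Longrightarrow> V (r *\<^sub>R h) = r\<^sup>2 * V h"
proof -
  assume h: "h \<in> H"
  have "V (r *\<^sub>R h) = r * Q (r *\<^sub>R h) h" unfolding V_def using h by (simp add: Q_scale_right)
  also have "Q (r *\<^sub>R h) h = r * Q h h" using h by (simp add: Q_sym[of "r *\<^sub>R h"] Q_scale_right)
  finally show ?thesis unfolding V_def by (simp add: power2_eq_square)
qed

definition KQ where "KQ = 2 + 2 * k / sqrt a0 + k * KD"

lemma KQ_pos: "KQ > 0" unfolding KQ_def using k_pos a0_pos KD(1) by (simp add: add_pos_nonneg)

lemma snd_bd: "x \<in> H \<Longrightarrow> norm (snd x) \<le> hn x / sqrt a0"
proof -
  assume x: "x \<in> H"
  have "sqrt a0 * norm (snd x) \<le> norm (R (snd x))" using x Hsp_iff norm_le_R by blast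
  also have "\<dots> \<le> hn x" by (rule hn_snd)
  finally show ?thesis using a0_pos by (simp add: field_simps)
qed

lemma Q_bd: assumes x: "x \<in> H" and y: "y \<in> H" shows "\<bar>Q x y\<bar> \<le> KQ * hn x * hn y"
proof -
  let ?X = "hn x" and ?Y = "hn y"
  have X0: "?X \<ge> 0" and Y0: "?Y \<ge> 0" by (simp_all add: hn_nonneg)
  have sa: "sqrt a0 > 0" using a0_pos by simp
  have t1: "\<bar>Re (ip (fst x) (fst y))\<bar> \<le> ?X * ?Y"
    using abs_Re_ip_le[of "fst x" "fst y"] hn_fst[of x] hn_fst[of y]
    by (meson mult_mono norm_ge_zero order_trans)
  have t2: "\<bar>Re (ip (fst x) (snd y))\<bar> \<le> ?X * ?Y / sqrt a0"
  proof -
    have "\<bar>Re (ip (fst x) (snd y))\<bar> \<le> norm (fst x) * norm (snd y)" by (rule abs_Re_ip_le)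
    also have "\<dots> \<le> ?X * (?Y / sqrt a0)" using hn_fst[of x] snd_bd[OF y]
      by (meson mult_mono norm_ge_zero order_trans)
    finally show ?thesis by simp
  qed
  have t3: "\<bar>Re (ip (fst y) (snd x))\<bar> \<le> ?X * ?Y / sqrt a0"
  proof -
    have "\<bar>Re (ip (fst y) (snd x))\<bar> \<le> norm (fst y) * norm (snd x)" by (rule abs_Re_ip_le)
    also have "\<dots> \<le> ?Y * (?X / sqrt a0)" using hn_fst[of y] snd_bd[OF x]
      by (meson mult_mono norm_ge_zero order_trans)
    finally show ?thesis by (simp add: mult.commute)
  qed
  have t4: "\<bar>Re (ip (R (snd x)) (R (snd y)))\<bar> \<le> ?X * ?Y"
    using abs_Re_ip_le[of "R (snd x)" "R (snd y)"] hn_snd[of x] hn_snd[of y]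
    by (meson mult_mono norm_ge_zero order_trans)
  have t5: "\<bar>Re (ip (Dp (R (snd x))) (R (snd y)))\<bar> \<le> KD * ?X * ?Y"
  proof -
    have "\<bar>Re (ip (Dp (R (snd x))) (R (snd y)))\<bar> \<le> KD * norm (R (snd x)) * norm (R (snd y))"
      by (rule Re_Dp_bd)
    also have "\<dots> \<le> KD * ?X * ?Y" using hn_snd[of x] hn_snd[of y] KD(1)
      by (intro mult_mono) (auto intro: mult_left_mono simp: hn_nonneg)
    finally show ?thesis .
  qed
  have t6: "\<bar>Re (ip (Dp (R (snd y))) (R (snd x)))\<bar> \<le> KD * ?X * ?Y"
  proof -
    have "\<bar>Re (ip (Dp (R (snd y))) (R (snd x)))\<bar> \<le> KD * norm (R (snd y)) * norm (R (snd x))"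
      by (rule Re_Dp_bd)
    also have "\<dots> \<le> KD * ?Y * ?X" using hn_snd[of x] hn_snd[of y] KD(1)
      by (intro mult_mono) (auto intro: mult_left_mono simp: hn_nonneg)
    finally show ?thesis by (simp add: mult_ac)
  qed
  have "\<bar>Q x y\<bar> \<le> \<bar>Re (ip (fst x) (fst y))\<bar> + k * \<bar>Re (ip (fst x) (snd y))\<bar> + k * \<bar>Re (ip (fst y) (snd x))\<bar>
      + \<bar>Re (ip (R (snd x)) (R (snd y)))\<bar>
      + k / 2 * (\<bar>Re (ip (Dp (R (snd x))) (R (snd y)))\<bar> + \<bar>Re (ip (Dp (R (snd y))) (R (snd x)))\<bar>)"
    unfolding Q_def using k_pos by (intro abs_comb) simp
  also have "\<dots> \<le> ?X * ?Y + k * (?X * ?Y / sqrt a0) + k * (?X * ?Y / sqrt a0) + ?X * ?Y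
      + k / 2 * (KD * ?X * ?Y + KD * ?X * ?Y)"
    using t1 t2 t3 t4 t5 t6 k_pos
    by (intro add_mono mult_left_mono) auto
  also have "\<dots> = KQ * ?X * ?Y" unfolding KQ_def by (simp add: field_simps)
  finally show ?thesis .
qed

lemma V_bd: "x \<in> H \<Longrightarrow> \<bar>V x\<bar> \<le> KQ * (hn x)\<^sup>2"
  unfolding V_def using Q_bd[of x x] by (simp add: power2_eq_square mult.assoc)

end




context lyap begin

lemma V_deriv:
  assumes z: "z \<in> Dom" and t: "t \<ge> 0"
  shows "((\<lambda>s. V (Tsg s z)) has_real_derivative 2 * Q (Tsg t z) (G (Tsg t z))) (at t within {0..})"
proof -
  define xt where "xt = Tsg t z"
  define x' where "x' = G xt"
  have zH: "z \<in> H" using Dom_H z by blast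
  have xtD: "xt \<in> Dom" using Dom_inv[OF z t] by (simp add: xt_def)
  have xtH: "xt \<in> H" using Dom_H xtD by blast
  have x'H: "x' \<in> H" using G_H xtD by (simp add: x'_def)
  define qv where "qv s = (1 / (s - t)) *\<^sub>R (Tsg s z - xt)" for s
  define hq where "hq s = hn (qv s - x')" for s
  have hq0: "(hq \<longlongrightarrow> 0) (at t within {0..})"
    using T_deriv[OF z t] unfolding has_deriv_N_def hq_def qv_def xt_def x'_def .
  define D where "D = 2 * Q xt x'"
  define B where "B s = 2 * KQ * hn xt * hq s + \<bar>s - t\<bar> * KQ * (hq s + hn x')\<^sup>2" for s
  have key: "\<bar>(V (Tsg s z) - V xt) / (s - t) - D\<bar> \<le> B s" if s: "s \<ge> 0" "s \<noteq> t" for s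
  proof -
    define d where "d = s - t"
    have d: "d \<noteq> 0" using s by (simp add: d_def)
    have xsH: "Tsg s z \<in> H" using T_in s zH by simp
    have qvH: "qv s \<in> H" unfolding qv_def using xsH xtH by (simp add: Hsp_diff Hsp_scaleR)
    have xs: "Tsg s z = xt + d *\<^sub>R qv s" unfolding qv_def d_def using d by (simp add: d_def)
    have "V (Tsg s z) = V xt + 2 * Q xt (d *\<^sub>R qv s) + V (d *\<^sub>R qv s)"
      unfolding xs by (rule V_add[OF xtH Hsp_scaleR[OF qvH]])
    also have "\<dots> = V xt + 2 * d * Q xt (qv s) + d\<^sup>2 * V (qv s)"
      using qvH by (simp add: Q_scale_right V_scale)
    finally have "(V (Tsg s z) - V xt) / (s - t) = 2 * Q xt (qv s) + d * V (qv s)"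
      using d by (simp add: d_def[symmetric] power2_eq_square field_simps)
    then have e: "(V (Tsg s z) - V xt) / (s - t) - D = 2 * Q xt (qv s - x') + d * V (qv s)"
      unfolding D_def using qvH x'H by (simp add: Q_diff_right)
    have qx: "qv s - x' \<in> H" using qvH x'H Hsp_diff by blast
    have b1: "\<bar>2 * Q xt (qv s - x')\<bar> \<le> 2 * KQ * hn xt * hq s"
      using Q_bd[OF xtH qx] unfolding hq_def by simp
    have "hn (qv s) \<le> hq s + hn x'"
    proof -
      have "qv s = (qv s - x') + x'" by simp
      then show ?thesis unfolding hq_def using hn_triangle[OF qx x'H] by metis
    qed
    then have "(hn (qv s))\<^sup>2 \<le> (hq s + hn x')\<^sup>2" by (intro power_mono) (simp_all add: hn_nonneg)
    then have "\<bar>V (qv s)\<bar> \<le> KQ * (hq s + hn x')\<^sup>2"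
      using V_bd[OF qvH] KQ_pos by (meson mult_left_mono less_imp_le order_trans)
    then have b2: "\<bar>d * V (qv s)\<bar> \<le> \<bar>s - t\<bar> * KQ * (hq s + hn x')\<^sup>2"
      by (simp add: abs_mult d_def mult_left_mono mult.assoc)
    show ?thesis unfolding e B_def using b1 b2 by (smt (verit) abs_triangle_ineq)
  qed
  have Blim: "(B \<longlongrightarrow> 2 * KQ * hn xt * 0 + \<bar>t - t\<bar> * KQ * (0 + hn x')\<^sup>2) (at t within {0..})"
    unfolding B_def by (intro tendsto_intros hq0)
  then have Blim': "(B \<longlongrightarrow> 0) (at t within {0..})" by simp
  have "((\<lambda>s. (V (Tsg s z) - V xt) / (s - t) - D) \<longlongrightarrow> 0) (at t within {0..})"
  proof (rule Lim_null_comparison[OF _ Blim'])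
    show "\<forall>\<^sub>F s in at t within {0..}. norm ((V (Tsg s z) - V xt) / (s - t) - D) \<le> B s"
      unfolding eventually_at_filter using key by (intro always_eventually) auto
  qed
  then have "((\<lambda>s. (V (Tsg s z) - V xt) / (s - t)) \<longlongrightarrow> D) (at t within {0..})"
    by (rule LIM_zero_cancel)
  then show ?thesis unfolding has_field_derivative_iff D_def x'_def xt_def .
qed

end




context lyap begin

definition c1 where "c1 = 2 + 2 * k\<^sup>2 / a0"

lemma c1_pos: "c1 > 0" unfolding c1_def using a0_pos by (simp add: add_pos_nonneg)

lemma V_lower: assumes x: "x \<in> H" shows "(hn x)\<^sup>2 \<le> c1 * V x"
proof -
  define x1 where "x1 = fst x"
  define x2 where "x2 = snd x"
  have x2V: "x2 \<in> VR" using x Hsp_iff x2_def by blast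
  define u where "u = x1 + k *\<^sub>R x2"
  have nu: "(norm u)\<^sup>2 = (norm x1)\<^sup>2 + 2 * k * Re (ip x1 x2) + k\<^sup>2 * (norm x2)\<^sup>2"
    unfolding u_def norm_add_sq by (simp add: ip_scaleR_right power_mult_distrib)
  have bb: "\<beta> * (norm x2)\<^sup>2 \<le> Re (ip (Dp (R x2)) (R x2))" by (rule beta_bd[OF x2V])
  have "k * (k * (norm x2)\<^sup>2) \<le> k * (\<beta> * (norm x2)\<^sup>2)"
    using k_lt k_pos by (intro mult_left_mono mult_right_mono) auto
  also have "\<dots> \<le> k * Re (ip (Dp (R x2)) (R x2))" using bb k_pos by (intro mult_left_mono) auto
  finally have kk: "k\<^sup>2 * (norm x2)\<^sup>2 \<le> k * Re (ip (Dp (R x2)) (R x2))" by (simp add: power2_eq_square mult.assoc)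
  have Vge: "(norm u)\<^sup>2 + (norm (R x2))\<^sup>2 \<le> V x"
    unfolding V_eq x1_def[symmetric] x2_def[symmetric] using nu kk by linarith
  have par: "(norm (u - k *\<^sub>R x2))\<^sup>2 \<le> 2 * (norm u)\<^sup>2 + 2 * (norm (k *\<^sub>R x2))\<^sup>2"
    using parallelogram[of u "k *\<^sub>R x2"] zero_le_power2[of "norm (u + k *\<^sub>R x2)"] by linarith
  have "u - k *\<^sub>R x2 = x1" unfolding u_def by simp
  then have a: "(norm x1)\<^sup>2 \<le> 2 * (norm u)\<^sup>2 + 2 * k\<^sup>2 * (norm x2)\<^sup>2"
    using par k_pos by (simp add: power_mult_distrib)
  have b: "2 * k\<^sup>2 * (norm x2)\<^sup>2 \<le> 2 * k\<^sup>2 / a0 * (norm (R x2))\<^sup>2"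
    using mult_left_mono[OF norm_sq_le_R[OF x2V], of "2 * k\<^sup>2"] by simp
  have "(hn x)\<^sup>2 = (norm x1)\<^sup>2 + (norm (R x2))\<^sup>2" by (simp add: hn_sq x1_def x2_def)
  also have "\<dots> \<le> 2 * (norm u)\<^sup>2 + (1 + 2 * k\<^sup>2 / a0) * (norm (R x2))\<^sup>2"
    using a b by (simp add: algebra_simps)
  also have "\<dots> \<le> c1 * ((norm u)\<^sup>2 + (norm (R x2))\<^sup>2)"
    unfolding c1_def using a0_pos by (simp add: algebra_simps)
  also have "\<dots> \<le> c1 * V x" using Vge c1_pos by (intro mult_left_mono) auto
  finally show ?thesis .
qed

lemma energy_decay:
  assumes z: "z \<in> Dom" and t: "t \<ge> 0" and nontriv: "\<exists>v\<in>VR. v \<noteq> 0"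
  shows "(hn (Tsg t z))\<^sup>2 \<le> c1 * KQ * exp (- 2 * k * \<theta> * t) * (hn z)\<^sup>2"
proof -
  have zH: "z \<in> H" using Dom_H z by blast
  have dec: "V (Tsg t z) \<le> exp (- (2 * k * \<theta>) * t) * V (Tsg 0 z)"
  proof (rule decay_cmp[where g = "\<lambda>s. V (Tsg s z)" and g' = "\<lambda>s. 2 * Q (Tsg s z) (G (Tsg s z))"])
    show "\<And>s. 0 \<le> s \<Longrightarrow> ((\<lambda>s. V (Tsg s z)) has_real_derivative 2 * Q (Tsg s z) (G (Tsg s z))) (at s within {0..})"
      using V_deriv[OF z] by blast
    show "\<And>s. 0 \<le> s \<Longrightarrow> 2 * Q (Tsg s z) (G (Tsg s z)) \<le> - (2 * k * \<theta>) * V (Tsg s z)"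
    proof -
      fix s :: real assume "0 \<le> s"
      then have "Tsg s z \<in> Dom" using Dom_inv[OF z] by blast
      from lyap_ineq[OF this nontriv]
      show "2 * Q (Tsg s z) (G (Tsg s z)) \<le> - (2 * k * \<theta>) * V (Tsg s z)" by simp
    qed
    show "0 \<le> t" by (rule t)
  qed
  have xH: "Tsg t z \<in> H" using T_in t zH by blast
  have "(hn (Tsg t z))\<^sup>2 \<le> c1 * V (Tsg t z)" by (rule V_lower[OF xH])
  also have "\<dots> \<le> c1 * (exp (- (2 * k * \<theta>) * t) * V z)"
    using dec T_0[OF zH] c1_pos by (intro mult_left_mono) auto
  also have "\<dots> \<le> c1 * (exp (- (2 * k * \<theta>) * t) * (KQ * (hn z)\<^sup>2))"
    using V_bd[OF zH] c1_pos by (intro mult_left_mono) auto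
  finally show ?thesis by (simp add: mult_ac)
qed

end




context lyap begin

lemma deriv_comp:
  assumes z: "z \<in> Dom" and t: "t \<ge> 0"
  shows "has_deriv_N (\<lambda>x. norm (R x)) (\<lambda>s. snd (Tsg s z)) (fst (Tsg t z)) t"
    and "has_deriv_N norm (\<lambda>s. fst (Tsg s z)) (fst (G (Tsg t z))) t"
proof -
  define E where "E s = (1 / (s - t)) *\<^sub>R (Tsg s z - Tsg t z) - G (Tsg t z)" for s
  have lim: "((\<lambda>s. hn (E s)) \<longlongrightarrow> 0) (at t within {0..})"
    using T_deriv[OF z t] unfolding has_deriv_N_def E_def .
  have sndE: "snd (E s) = (1 / (s - t)) *\<^sub>R (snd (Tsg s z) - snd (Tsg t z)) - fst (Tsg t z)" for s
    unfolding E_def by (simp add: calA_def)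
  have fstE: "fst (E s) = (1 / (s - t)) *\<^sub>R (fst (Tsg s z) - fst (Tsg t z)) - fst (G (Tsg t z))" for s
    unfolding E_def by simp
  show "has_deriv_N (\<lambda>x. norm (R x)) (\<lambda>s. snd (Tsg s z)) (fst (Tsg t z)) t"
    unfolding has_deriv_N_def
  proof (rule Lim_null_comparison[OF _ lim])
    show "\<forall>\<^sub>F s in at t within {0..}. norm (norm (R ((1 / (s - t)) *\<^sub>R (snd (Tsg s z) - snd (Tsg t z)) - fst (Tsg t z)))) \<le> hn (E s)"
      using hn_snd[of "E _"] by (intro always_eventually allI) (simp add: sndE[symmetric])
  qed
  show "has_deriv_N norm (\<lambda>s. fst (Tsg s z)) (fst (G (Tsg t z))) t"
    unfolding has_deriv_N_def
  proof (rule Lim_null_comparison[OF _ lim])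
    show "\<forall>\<^sub>F s in at t within {0..}. norm (norm ((1 / (s - t)) *\<^sub>R (fst (Tsg s z) - fst (Tsg t z)) - fst (G (Tsg t z)))) \<le> hn (E s)"
      using hn_fst[of "E _"] by (intro always_eventually allI) (simp add: fstE[symmetric])
  qed
qed

lemma main_lyap:
  "\<exists>C>0. \<forall>u1 u0. (u1, u0) \<in> Dom \<longrightarrow>
     (\<forall>t\<ge>0. Tsg t (u1, u0) \<in> Dom) \<and>
     (\<forall>t\<ge>0. has_deriv_N (hnorm R) (\<lambda>s. Tsg s (u1, u0)) (G (Tsg t (u1, u0))) t) \<and>
     (\<exists>u' u''. is_solution VR R S Dp (\<lambda>t. snd (Tsg t (u1, u0))) u' u'' \<and>
        snd (Tsg 0 (u1, u0)) = u0 \<and> u' 0 = u1 \<and>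
        (\<forall>t\<ge>0. (norm (R (snd (Tsg t (u1, u0)))))\<^sup>2 + (norm (u' t))\<^sup>2
           \<le> C * exp (- 2 * k * \<theta> * t) * ((norm (R u0))\<^sup>2 + (norm u1)\<^sup>2)))"
proof (rule exI[where x="c1 * KQ"], intro conjI allI impI)
  show "0 < c1 * KQ" using c1_pos KQ_pos by simp
  fix u1 u0 assume z: "(u1, u0) \<in> Dom"
  define z where "z = (u1, u0)"
  have zD: "z \<in> Dom" using z by (simp add: z_def)
  have zH: "z \<in> H" using Dom_H zD by blast
  show "Tsg t (u1, u0) \<in> Dom" if "t \<ge> 0" for t using Dom_inv[OF zD that] by (simp add: z_def)
  show "has_deriv_N (hnorm R) (\<lambda>s. Tsg s (u1, u0)) (G (Tsg t (u1, u0))) t" if "t \<ge> 0" for t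
    using T_deriv[OF zD that] by (simp add: z_def)
  define u' where "u' t = fst (Tsg t z)" for t
  define u'' where "u'' t = fst (G (Tsg t z))" for t
  show "\<exists>u' u''. is_solution VR R S Dp (\<lambda>t. snd (Tsg t (u1, u0))) u' u'' \<and>
        snd (Tsg 0 (u1, u0)) = u0 \<and> u' 0 = u1 \<and>
        (\<forall>t\<ge>0. (norm (R (snd (Tsg t (u1, u0)))))\<^sup>2 + (norm (u' t))\<^sup>2
           \<le> c1 * KQ * exp (- 2 * k * \<theta> * t) * ((norm (R u0))\<^sup>2 + (norm u1)\<^sup>2))"
  proof (rule exI[of _ u'], rule exI[of _ u''], intro conjI)
    show "is_solution VR R S Dp (\<lambda>t. snd (Tsg t (u1, u0))) u' u''"
      unfolding is_solution_def
      apply (intro allI impI conjI)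
      subgoal for t using Dom_inv[OF zD, of t] unfolding z_def by (auto simp: dom_calA_def)
      subgoal for t using Dom_inv[OF zD, of t] unfolding u'_def z_def by (auto simp: dom_calA_def)
      subgoal for t using deriv_comp(1)[OF zD, of t] by (simp add: u'_def z_def)
      subgoal for t using deriv_comp(2)[OF zD, of t] unfolding u'_def u''_def by simp
      subgoal for t using Dom_inv[OF zD, of t] unfolding u'_def z_def by (auto simp: dom_calA_def)
      subgoal for t unfolding u''_def u'_def z_def by (simp add: calA_def)
      done
    show "snd (Tsg 0 (u1, u0)) = u0" using T_0[OF zH] by (simp add: z_def)
    show "u' 0 = u1" using T_0[OF zH] by (simp add: u'_def z_def)
    show "\<forall>t\<ge>0. (norm (R (snd (Tsg t (u1, u0)))))\<^sup>2 + (norm (u' t))\<^sup>2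
           \<le> c1 * KQ * exp (- 2 * k * \<theta> * t) * ((norm (R u0))\<^sup>2 + (norm u1)\<^sup>2)"
    proof (intro allI impI)
      fix t :: real assume t: "t \<ge> 0"
      have lhs: "(norm (R (snd (Tsg t (u1, u0)))))\<^sup>2 + (norm (u' t))\<^sup>2 = (hn (Tsg t z))\<^sup>2"
        unfolding u'_def z_def by (simp add: hn_sq)
      have rhs: "(norm (R u0))\<^sup>2 + (norm u1)\<^sup>2 = (hn z)\<^sup>2" unfolding z_def by (simp add: hn_sq)
      show "(norm (R (snd (Tsg t (u1, u0)))))\<^sup>2 + (norm (u' t))\<^sup>2
           \<le> c1 * KQ * exp (- 2 * k * \<theta> * t) * ((norm (R u0))\<^sup>2 + (norm u1)\<^sup>2)"
      proof (cases "\<exists>v\<in>VR. v \<noteq> 0")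
        case True
        show ?thesis unfolding lhs rhs using energy_decay[OF zD t True] by simp
      next
        case False
        have tD: "Tsg t z \<in> Dom" using Dom_inv[OF zD t] by blast
        then have "fst (Tsg t z) \<in> VR" "snd (Tsg t z) \<in> VR" by (auto simp: dom_calA_def split: prod.splits)
        then have "fst (Tsg t z) = 0" "snd (Tsg t z) = 0" using False by auto
        then have "(hn (Tsg t z))\<^sup>2 = 0" by (simp add: hn_sq R_zero)
        moreover have "0 \<le> (c1 * KQ) * exp (- 2 * k * \<theta> * t) * (hn z)\<^sup>2"
          using c1_pos KQ_pos by simp
        ultimately show ?thesis unfolding lhs rhs by simp
      qed
    qed
  qed
qed

end



theorem mainTheorem6:
  fixes ip :: "'a::{complex_normed_vector,banach} \<Rightarrow> 'a \<Rightarrow> complex"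
    and VA VT VR :: "'a set" and A T R S Dp Dps :: "'a \<Rightarrow> 'a"
    and a0 k p q :: real
    and Tsg :: "real \<Rightarrow> 'a \<times> 'a \<Rightarrow> 'a \<times> 'a"
  assumes hilbert: "is_cinner ip"
    and A_msect: "m_sectorial ip VA A"
    and a0_pos: "a0 > 0"
    and A_coercive: "\<forall>x\<in>VA. a0 * (norm x)\<^sup>2 \<le> Re (ip (A x) x)"
    and T_sa: "self_adjoint_op ip VT T"
    and T_ge: "\<forall>x\<in>VT. a0 * (norm x)\<^sup>2 \<le> Re (ip (T x) x)"
    and R_sqrt: "is_sqrt_op ip VR R VT T"
    and S_bdd: "bounded_clinear_op S"
    and S_sa: "\<forall>x y. ip (S x) y = ip x (S y)"
    and A_decomp: "VA = {x \<in> VR. R x + \<i> *\<^sub>C S (R x) \<in> VR}"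
    and A_decomp': "\<forall>x\<in>VA. A x = R (R x + \<i> *\<^sub>C S (R x))"
    and Dp_bdd: "bounded_clinear_op Dp"
    and Dps_adj: "\<forall>x y. ip (Dp x) y = ip x (Dps y)"
    and delta_pos: "delta_C ip VR R Dp > 0"
    and beta_pos: "beta_C ip VR R Dp > 0"
    and k_pos: "0 < k" and k_lt: "k < beta_C ip VR R Dp"
    and p_pos: "p > 0" and q_pos: "q > 0" and pq: "p + q \<le> 1"
    and omega1: "omega1' ip VR R S Dp Dps a0 k p q \<ge> 1"
    and Tsg_gen: "generated_by VR R Tsg (dom_calA VR R S Dp) (calA R S Dp)"
  shows "\<exists>C>0. \<forall>u1 u0. (u1, u0) \<in> dom_calA VR R S Dp \<longrightarrow>
           (\<forall>t\<ge>0. Tsg t (u1, u0) \<in> dom_calA VR R S Dp) \<and>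
           (\<forall>t\<ge>0. has_deriv_N (hnorm R) (\<lambda>s. Tsg s (u1, u0)) (calA R S Dp (Tsg t (u1, u0))) t) \<and>
           (\<exists>u' u''. is_solution VR R S Dp (\<lambda>t. snd (Tsg t (u1, u0))) u' u'' \<and>
              snd (Tsg 0 (u1, u0)) = u0 \<and> u' 0 = u1 \<and>
              (\<forall>t\<ge>0. (norm (R (snd (Tsg t (u1, u0)))))\<^sup>2 + (norm (u' t))\<^sup>2
                 \<le> C * exp (- 2 * k * theta' ip VR R S Dp Dps a0 k p q * t)
                     * ((norm (R u0))\<^sup>2 + (norm u1)\<^sup>2)))"
  proof -
  have Rs: "self_adjoint_op ip VR R" "VT = {x \<in> VR. R x \<in> VR}" "\<forall>x\<in>VT. T x = R (R x)"
    using R_sqrt unfolding is_sqrt_op_def by auto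
  interpret L: lyap ip VR VT R T S Dp Dps a0 Tsg k p q
  proof (unfold_locales)
    show "is_cinner ip" by (rule hilbert)
  qed (use Rs T_sa T_ge a0_pos S_bdd S_sa Dp_bdd Dps_adj Tsg_gen delta_pos beta_pos k_pos k_lt
        p_pos q_pos pq omega1 in auto)
  show ?thesis using L.main_lyap by simp
qed

end
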